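(* In the setting and notation described in the context: (a) for $c\in G_n/\!/K_n$ and $d\in G_k/\!/K_k$ with representatives $g\in G_n$, $h\in G_k$, the product in $\mathrm{gr}\,\mathcal{B}$ of the image of $B[c]$ in $\mathcal{B}_n/\mathcal{B}_{n-1}$ and the image of $B[d]$ in $\mathcal{B}_k/\mathcal{B}_{k-1}$ equals the image in $\mathcal{B}_{n+k}/\mathcal{B}_{n+k-1}$ of $B[e]$, where $e\in G_{n+k}/\!/K_{n+k}$ is the class of $\tilde\nu$ with $((\nu,V_{n+k}))=\theta_{n,k}((g,V_n))\theta_{n,k}^{-1}\circ((h,V_k))$; (b) if $X=\varnothing$, then the algebra $\mathrm{gr}\,\mathcal{B}$ is commutative.
   Context: Let $I$ be a finite set, $X$ a finite or countable set, $V=X\sqcup(I\times\mathbb{N})$, $V_n=X\sqcup(I\times J_n)$ with $J_n=\{1,\dots,n\}$. $S_\infty$ (finitely supported permutations of $\mathbb{N}$) acts on $V$ by $\sigma(i,m)=(i,\sigma(m))$ on $I\times\mathbb{N}$ and trivially on $X$; $S_n\subset S_\infty$ permutes $J_n$. $G_\infty$ is a subgroup of the group of finitely supported permutations of $V$ containing $S_\infty$; $G_n$ is the set of elements of $G_\infty$ fixing every point outside $V_n$; $K_n=S_n$; $G_n/\!/K_n$ is the set of orbits of $K_n$ on $G_n$ under conjugation. Local bijections: a local bijection is a pair $((\omega,\Omega))$ with $\Omega=X\cup(I\times F)$, $F\subset\mathbb{N}$ finite, $\omega:\Omega\to\Omega$ a bijection; $\tilde\omega$ is its extension to $V$ fixing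 all points outside $\Omega$. Product: $((\omega,\Omega))\circ((\mu,M))=((\tilde\omega\tilde\mu|_{\Omega\cup M},\Omega\cup M))$. Formal series of local bijections are multiplied by the convolution $c_{((\nu,N))}=\sum a_{((\omega,\Omega))}b_{((\mu,M))}$ over pairs with $\Omega\cup M=N$, $\tilde\omega\tilde\mu=\tilde\nu$. An injective map $\sigma:J_n\to\mathbb{N}$ is extended to $V_n\to X\cup(I\times\sigma(J_n))$ by $(i,m)\mapsto(i,\sigma(m))$ and identity on $X$; for $g\in G_n$, $\sigma((g,V_n))\sigma^{-1}:=((\sigma g\sigma^{-1},X\cup(I\times\sigma(J_n))))$. For $c\in G_n/\!/K_n$ with representative $g$, $B[c]=\sum_{\Omega\subset\mathbb{N},\#\Omega=n}\sum_{\sigma:J_n\to\Omega\text{ bijective}}\sigma((g,V_n))\sigma^{-1}$. The linear span $\mathcal{B}$ of all $B[c]$, $c\in\coprod_{j\ge0}G_j/\!/K_j$, is closed under convolution and the $B[c]$ form a basis of it. $\mathcal{B}_n$ is the span of the $B[c]$ with $c\in\coprod_{j=0}^{n}G_j/\!/K_j$ ($\mathcal{B}_{-1}=0$); one has $\mathcal{B}_k*\mathcal{B}_l\subseteq\mathcal{B}_{k+l}$, and $\mathrm{gr}\,\mathcal{B}=\bigoplus_{k\ge0}\mathcal{B}_k/\mathcal{B}_{k-1}$ is the associated graded algebra with product induced by $\mathcal{B}_k\times\mathcal{B}_l\to\mathcal{B}_{k+l}$. $\theta_{n,k}:J_n\to J_{n+k}$ is the injective map $j\mapsto j+k$. *)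

theory Defs
  imports Complex_Main "HOL-Combinatorics.Permutations" "HOL-Library.FuncSet"
    "HOL-Library.Countable_Set"
begin

text \<open>Points of V: Inl x for x in X, Inr (i,m) for (i,m) in I x N, where N = {1,2,...}.\<close>

type_synonym ('x,'i) pt = "'x + 'i \<times> nat"

definition OmegaF :: "'x set \<Rightarrow> 'i set \<Rightarrow> nat set \<Rightarrow> ('x,'i) pt set" where
  "OmegaF X I F = Inl ` X \<union> Inr ` (I \<times> F)"

definition Vall :: "'x set \<Rightarrow> 'i set \<Rightarrow> ('x,'i) pt set" where
  "Vall X I = OmegaF X I {1..}"

definition Vn :: "'x set \<Rightarrow> 'i set \<Rightarrow> nat \<Rightarrow> ('x,'i) pt set" where
  "Vn X I n = OmegaF X I {1..n}"

definition liftN :: "(nat \<Rightarrow> nat) \<Rightarrow> ('x,'i) pt \<Rightarrow> ('x,'i) pt" where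
  "liftN s v = (case v of Inl x \<Rightarrow> Inl x | Inr (i,m) \<Rightarrow> Inr (i, s m))"

definition fin_supp :: "('a \<Rightarrow> 'a) \<Rightarrow> bool" where
  "fin_supp f \<longleftrightarrow> finite {v. f v \<noteq> v}"

definition S_inf :: "(nat \<Rightarrow> nat) set" where
  "S_inf = {s. s permutes {1..} \<and> fin_supp s}"

definition admissible_group :: "'x set \<Rightarrow> 'i set \<Rightarrow> (('x,'i) pt \<Rightarrow> ('x,'i) pt) set \<Rightarrow> bool" where
  "admissible_group X I G \<longleftrightarrow>
     (\<forall>g\<in>G. g permutes Vall X I \<and> fin_supp g) \<and>
     id \<in> G \<and> (\<forall>g\<in>G. \<forall>h\<in>G. g \<circ> h \<in> G) \<and> (\<forall>g\<in>G. inv g \<in> G) \<and>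
     (\<forall>s\<in>S_inf. liftN s \<in> G)"

definition Gn :: "'x set \<Rightarrow> 'i set \<Rightarrow> (('x,'i) pt \<Rightarrow> ('x,'i) pt) set \<Rightarrow> nat
                   \<Rightarrow> (('x,'i) pt \<Rightarrow> ('x,'i) pt) set" where
  "Gn X I G n = {g\<in>G. \<forall>v. v \<notin> Vn X I n \<longrightarrow> g v = v}"

text \<open>A local bijection ((omega, X \<union> I \<times> F)) is represented by the pair (F, omega~),
  where omega~ is the extension of omega fixing every point outside Omega.\<close>
type_synonym ('x,'i) lbij = "nat set \<times> (('x,'i) pt \<Rightarrow> ('x,'i) pt)"

definition lb_comp :: "('x,'i) lbij \<Rightarrow> ('x,'i) lbij \<Rightarrow> ('x,'i) lbij" where
  "lb_comp p q = (fst p \<union> fst q, snd p \<circ> snd q)"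

type_synonym ('x,'i) series = "('x,'i) lbij \<Rightarrow> complex"

definition conv :: "('x,'i) series \<Rightarrow> ('x,'i) series \<Rightarrow> ('x,'i) series" where
  "conv a b = (\<lambda>r. \<Sum>(p,q)\<in>{(p,q). a p \<noteq> 0 \<and> b q \<noteq> 0 \<and> lb_comp p q = r}. a p * b q)"

definition conj_loc :: "'x set \<Rightarrow> 'i set \<Rightarrow> nat \<Rightarrow> (('x,'i) pt \<Rightarrow> ('x,'i) pt)
                        \<Rightarrow> (nat \<Rightarrow> nat) \<Rightarrow> ('x,'i) lbij" where
  "conj_loc X I n g \<sigma> =
     (\<sigma> ` {1..n},
      \<lambda>v. if v \<in> OmegaF X I (\<sigma> ` {1..n})
           then liftN \<sigma> (g (liftN (inv_into {1..n} \<sigma>) v)) else v)"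

text \<open>B[c] for the class c of g in G_n: the coefficient of a local bijection r is the number of
  pairs (Omega, sigma) (Omega \<subseteq> N, #Omega = n, sigma : J_n \<rightarrow> Omega bijective) with
  sigma((g,V_n))sigma^{-1} = r; such pairs are exactly the injections J_n \<rightarrow> N.\<close>
definition Bser :: "'x set \<Rightarrow> 'i set \<Rightarrow> nat \<Rightarrow> (('x,'i) pt \<Rightarrow> ('x,'i) pt) \<Rightarrow> ('x,'i) series" where
  "Bser X I n g = (\<lambda>r. of_nat (card {\<sigma> \<in> {1..n} \<rightarrow>\<^sub>E {1..}. inj_on \<sigma> {1..n} \<and> conj_loc X I n g \<sigma> = r}))"

definition lin_span :: "('x,'i) series set \<Rightarrow> ('x,'i) series set" where
  "lin_span A = {\<lambda>r. \<Sum>s\<in>S. c s * s r | S c. finite S \<and> S \<subseteq> A}"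

definition Bfilt :: "'x set \<Rightarrow> 'i set \<Rightarrow> (('x,'i) pt \<Rightarrow> ('x,'i) pt) set \<Rightarrow> int \<Rightarrow> ('x,'i) series set" where
  "Bfilt X I G m = lin_span {Bser X I j g | j g. int j \<le> m \<and> g \<in> Gn X I G j}"

end

theory Submission imports Defs begin

lemma liftN_Inl[simp]: "liftN s (Inl x) = Inl x" by (simp add: liftN_def)
lemma liftN_Inr[simp]: "liftN s (Inr (i,m)) = Inr (i, s m)" by (simp add: liftN_def)
lemma OmegaF_Inl[simp]: "Inl x \<in> OmegaF X I F \<longleftrightarrow> x \<in> X" by (auto simp: OmegaF_def)
lemma OmegaF_Inr[simp]: "Inr (i,m) \<in> OmegaF X I F \<longleftrightarrow> i \<in> I \<and> m \<in> F" by (auto simp: OmegaF_def)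
lemma OmegaF_mono: "F \<subseteq> F' \<Longrightarrow> v \<in> OmegaF X I F \<Longrightarrow> v \<in> OmegaF X I F'"
  by (auto simp: OmegaF_def)

lemma pt_cases: obtains x where "v = Inl x" | i m where "v = Inr (i,m)"
  by (cases v) auto

lemma liftN_OmegaF: "(\<And>m. m \<in> F \<Longrightarrow> s m \<in> F') \<Longrightarrow> v \<in> OmegaF X I F \<Longrightarrow> liftN s v \<in> OmegaF X I F'"
  by (cases v rule: pt_cases) auto
lemma liftN_comp: "liftN s (liftN t v) = liftN (s \<circ> t) v"
  by (cases v rule: pt_cases) auto
lemma liftN_cong: "v \<in> OmegaF X I F \<Longrightarrow> (\<And>m. m \<in> F \<Longrightarrow> s m = t m) \<Longrightarrow> liftN s v = liftN t v"
  by (cases v rule: pt_cases) auto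

definition gfix :: "'x set \<Rightarrow> 'i set \<Rightarrow> nat \<Rightarrow> (('x,'i) pt \<Rightarrow> ('x,'i) pt) \<Rightarrow> bool" where
  "gfix X I n g \<longleftrightarrow> (\<forall>v. v \<notin> OmegaF X I {1..n} \<longrightarrow> g v = v) \<and> (\<forall>v \<in> OmegaF X I {1..n}. g v \<in> OmegaF X I {1..n})"

lemma Gn_gfix:
  assumes "admissible_group X I G" "g \<in> Gn X I G n" shows "gfix X I n g"
proof -
  have g: "g \<in> G" and fx: "\<And>v. v \<notin> Vn X I n \<Longrightarrow> g v = v" using assms(2) by (auto simp: Gn_def)
  have "g permutes Vall X I" using assms(1) g by (auto simp: admissible_group_def)
  hence inj: "inj g" by (rule permutes_inj)
  have "g v \<in> Vn X I n" if "v \<in> Vn X I n" for v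
  proof (rule ccontr)
    assume "g v \<notin> Vn X I n"
    hence "g (g v) = g v" by (rule fx)
    hence "g v = v" using inj by (auto dest: injD)
    with that \<open>g v \<notin> Vn X I n\<close> show False by simp
  qed
  thus ?thesis using fx by (auto simp: gfix_def Vn_def)
qed


lemma inv_into_cong': "(\<And>x. x \<in> A \<Longrightarrow> f x = f' x) \<Longrightarrow> inv_into A f = inv_into A f'"
  unfolding inv_into_def by (rule ext, rule arg_cong[where f=Eps]) auto

lemma conj_fst[simp]: "fst (conj_loc X I n g \<sigma>) = \<sigma> ` {1..n}"
  by (simp add: conj_loc_def)
lemma conj_out: "v \<notin> OmegaF X I (\<sigma> ` {1..n}) \<Longrightarrow> snd (conj_loc X I n g \<sigma>) v = v"
  by (simp add: conj_loc_def)
lemma conj_in: "v \<in> OmegaF X I (\<sigma> ` {1..n}) \<Longrightarrow>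
   snd (conj_loc X I n g \<sigma>) v = liftN \<sigma> (g (liftN (inv_into {1..n} \<sigma>) v))"
  by (simp add: conj_loc_def)

lemma gfixD1: "gfix X I n g \<Longrightarrow> v \<notin> OmegaF X I {1..n} \<Longrightarrow> g v = v" by (simp add: gfix_def)
lemma gfixD2: "v \<in> OmegaF X I {1..n} \<Longrightarrow> gfix X I n g \<Longrightarrow> g v \<in> OmegaF X I {1..n}" by (simp add: gfix_def)

lemma liftN_inv_into_Omega:
  "v \<in> OmegaF X I (\<sigma> ` A) \<Longrightarrow> liftN (inv_into A \<sigma>) v \<in> OmegaF X I A"
  by (rule liftN_OmegaF[where F="\<sigma> ` A"]) (auto intro: inv_into_into)

lemma conj_maps:
  assumes "gfix X I n g" "v \<in> OmegaF X I (\<sigma> ` {1..n})"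
  shows "snd (conj_loc X I n g \<sigma>) v \<in> OmegaF X I (\<sigma> ` {1..n})"
proof -
  have "liftN (inv_into {1..n} \<sigma>) v \<in> OmegaF X I {1..n}" using assms(2) by (rule liftN_inv_into_Omega)
  hence "g (liftN (inv_into {1..n} \<sigma>) v) \<in> OmegaF X I {1..n}" using assms(1) by (rule gfixD2)
  hence "liftN \<sigma> (g (liftN (inv_into {1..n} \<sigma>) v)) \<in> OmegaF X I (\<sigma> ` {1..n})"
    by (rule liftN_OmegaF[rotated]) auto
  thus ?thesis using assms(2) by (simp add: conj_in)
qed

lemma conj_maps_sup:
  assumes "gfix X I n g" "\<sigma> ` {1..n} \<subseteq> F" "v \<in> OmegaF X I F"
  shows "snd (conj_loc X I n g \<sigma>) v \<in> OmegaF X I F"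
  using conj_maps[OF assms(1)] conj_out assms(2,3) OmegaF_mono by metis

lemma conjloc_cong:
  assumes "\<And>j. j \<in> {1..n} \<Longrightarrow> \<sigma> j = \<sigma>' j" "gfix X I n g"
  shows "conj_loc X I n g \<sigma> = conj_loc X I n g \<sigma>'"
proof -
  have im: "\<sigma> ` {1..n} = \<sigma>' ` {1..n}" using assms(1) by (rule image_cong[OF refl])
  have ii: "inv_into {1..n} \<sigma> = inv_into {1..n} \<sigma>'" using assms(1) by (rule inv_into_cong')
  have "snd (conj_loc X I n g \<sigma>) v = snd (conj_loc X I n g \<sigma>') v" for v
  proof (cases "v \<in> OmegaF X I (\<sigma> ` {1..n})")
    case True
    have "liftN (inv_into {1..n} \<sigma>) v \<in> OmegaF X I {1..n}" using True by (rule liftN_inv_into_Omega)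
    hence "g (liftN (inv_into {1..n} \<sigma>) v) \<in> OmegaF X I {1..n}" using assms(2) by (rule gfixD2)
    hence "liftN \<sigma> (g (liftN (inv_into {1..n} \<sigma>) v)) = liftN \<sigma>' (g (liftN (inv_into {1..n} \<sigma>) v))"
      by (rule liftN_cong) (use assms(1) in auto)
    then show ?thesis using True im ii by (simp add: conj_in)
  next
    case False then show ?thesis using im by (simp add: conj_out)
  qed
  then show ?thesis using im by (intro prod_eqI) auto
qed


lemma lift_cancel1: "inj_on f A \<Longrightarrow> u \<in> OmegaF X I A \<Longrightarrow> liftN (inv_into A f) (liftN f u) = u"
  by (cases u rule: pt_cases) auto
lemma lift_cancel2: "v \<in> OmegaF X I (f ` A) \<Longrightarrow> liftN f (liftN (inv_into A f) v) = v"
  by (cases v rule: pt_cases) (auto simp: f_inv_into_f)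
lemma lift_img: "u \<in> OmegaF X I A \<Longrightarrow> liftN f u \<in> OmegaF X I (f ` A)"
  by (rule liftN_OmegaF) auto

definition tr :: "'x set \<Rightarrow> 'i set \<Rightarrow> nat \<Rightarrow> (nat \<Rightarrow> nat) \<Rightarrow> ('x,'i) lbij \<Rightarrow> ('x,'i) lbij" where
  "tr X I m \<rho> p = (\<rho> ` fst p, \<lambda>v. if v \<in> OmegaF X I (\<rho> ` {1..m})
      then liftN \<rho> (snd p (liftN (inv_into {1..m} \<rho>) v)) else v)"

lemma conj_tr: "conj_loc X I m g \<rho> = tr X I m \<rho> ({1..m}, g)"
  by (simp only: conj_loc_def tr_def fst_conv snd_conv)

lemma tr_conj:
  assumes r: "inj_on \<rho> {1..m}" and b: "\<beta> ` {1..n} \<subseteq> {1..m}" "inj_on \<beta> {1..n}" and g: "gfix X I n g"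
  shows "tr X I m \<rho> (conj_loc X I n g \<beta>) = conj_loc X I n g (\<rho> \<circ> \<beta>)"
proof -
  have rb: "inj_on (\<rho> \<circ> \<beta>) {1..n}" using r b by (meson comp_inj_on inj_on_subset)
  have sub: "(\<rho> \<circ> \<beta>) ` {1..n} \<subseteq> \<rho> ` {1..m}" using b by auto
  have "snd (tr X I m \<rho> (conj_loc X I n g \<beta>)) v = snd (conj_loc X I n g (\<rho> \<circ> \<beta>)) v" for v
  proof (cases "v \<in> OmegaF X I (\<rho> ` {1..m})")
    case vin: True
    define w where "w = liftN (inv_into {1..m} \<rho>) v"
    have vw: "v = liftN \<rho> w" using vin by (simp add: w_def lift_cancel2)
    have L: "snd (tr X I m \<rho> (conj_loc X I n g \<beta>)) v = liftN \<rho> (snd (conj_loc X I n g \<beta>) w)"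
      using vin by (simp add: tr_def w_def)
    show ?thesis
    proof (cases "w \<in> OmegaF X I (\<beta> ` {1..n})")
      case True
      define u where "u = liftN (inv_into {1..n} \<beta>) w"
      have u: "u \<in> OmegaF X I {1..n}" using True by (simp add: u_def liftN_inv_into_Omega)
      have wu: "w = liftN \<beta> u" using True by (simp add: u_def lift_cancel2)
      have vu: "v = liftN (\<rho> \<circ> \<beta>) u" using vw wu by (simp add: liftN_comp)
      have vin2: "v \<in> OmegaF X I ((\<rho> \<circ> \<beta>) ` {1..n})" unfolding vu using u by (rule lift_img)
      have "liftN (inv_into {1..n} (\<rho> \<circ> \<beta>)) v = u" using vu rb u by (simp add: lift_cancel1)
      then show ?thesis using L True vin2
        by (simp add: conj_in u_def liftN_comp)
    next
      case False
      have "v \<notin> OmegaF X I ((\<rho> \<circ> \<beta>) ` {1..n})"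
      proof
        assume h: "v \<in> OmegaF X I ((\<rho> \<circ> \<beta>) ` {1..n})"
        define u where "u = liftN (inv_into {1..n} (\<rho> \<circ> \<beta>)) v"
        have u: "u \<in> OmegaF X I {1..n}" using h by (simp add: u_def liftN_inv_into_Omega)
        have "v = liftN (\<rho> \<circ> \<beta>) u" using h by (simp add: u_def lift_cancel2)
        hence "v = liftN \<rho> (liftN \<beta> u)" by (simp add: liftN_comp)
        moreover have "liftN \<beta> u \<in> OmegaF X I {1..m}" using lift_img[OF u, of \<beta>] b OmegaF_mono by blast
        ultimately have "w = liftN \<beta> u" unfolding w_def using r lift_cancel1 by metis
        thus False using False u by (simp add: lift_img)
      qed
      then show ?thesis using L False vw by (simp add: conj_out)
    qed
  next
    case False
    hence "v \<notin> OmegaF X I ((\<rho> \<circ> \<beta>) ` {1..n})" using sub OmegaF_mono by blast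
    then show ?thesis using False by (simp add: tr_def conj_out)
  qed
  moreover have "fst (tr X I m \<rho> (conj_loc X I n g \<beta>)) = fst (conj_loc X I n g (\<rho> \<circ> \<beta>))"
    by (simp add: tr_def image_comp)
  ultimately show ?thesis by (intro prod_eqI) auto
qed


lemma tr_in: "v \<in> OmegaF X I (\<rho> ` {1..m}) \<Longrightarrow>
  snd (tr X I m \<rho> p) v = liftN \<rho> (snd p (liftN (inv_into {1..m} \<rho>) v))"
  by (simp add: tr_def)
lemma tr_out: "v \<notin> OmegaF X I (\<rho> ` {1..m}) \<Longrightarrow> snd (tr X I m \<rho> p) v = v"
  by (simp add: tr_def)

lemma tr_comp:
  assumes r: "inj_on \<rho> {1..m}" and q: "\<And>v. v \<in> OmegaF X I {1..m} \<Longrightarrow> snd q v \<in> OmegaF X I {1..m}"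
  shows "tr X I m \<rho> (lb_comp p q) = lb_comp (tr X I m \<rho> p) (tr X I m \<rho> q)"
proof -
  have "snd (tr X I m \<rho> (lb_comp p q)) v = snd (lb_comp (tr X I m \<rho> p) (tr X I m \<rho> q)) v" for v
  proof (cases "v \<in> OmegaF X I (\<rho> ` {1..m})")
    case True
    define w where "w = liftN (inv_into {1..m} \<rho>) v"
    have w: "w \<in> OmegaF X I {1..m}" using True by (simp add: w_def liftN_inv_into_Omega)
    have qw: "snd q w \<in> OmegaF X I {1..m}" using q w .
    have t1: "snd (tr X I m \<rho> q) v = liftN \<rho> (snd q w)" using True by (simp add: tr_in w_def)
    have t2: "liftN \<rho> (snd q w) \<in> OmegaF X I (\<rho> ` {1..m})" using qw by (rule lift_img)
    have t3: "liftN (inv_into {1..m} \<rho>) (liftN \<rho> (snd q w)) = snd q w" using r qw by (rule lift_cancel1)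
    have t0: "snd (tr X I m \<rho> (lb_comp p q)) v = liftN \<rho> (snd p (snd q w))"
      using True by (simp add: tr_in w_def lb_comp_def)
    have t4: "snd (tr X I m \<rho> p) (liftN \<rho> (snd q w)) = liftN \<rho> (snd p (snd q w))"
      using t2 t3 by (simp add: tr_in)
    show ?thesis using t0 t1 t4 by (simp add: lb_comp_def)
  next
    case False then show ?thesis by (simp add: tr_out lb_comp_def)
  qed
  moreover have "fst (tr X I m \<rho> (lb_comp p q)) = fst (lb_comp (tr X I m \<rho> p) (tr X I m \<rho> q))"
    by (simp add: tr_def lb_comp_def image_Un)
  ultimately show ?thesis by (intro prod_eqI) auto
qed

definition JS :: "nat \<Rightarrow> nat \<Rightarrow> nat \<Rightarrow> ((nat \<Rightarrow> nat) \<times> (nat \<Rightarrow> nat)) set" where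
  "JS n k m = {(\<alpha>,\<beta>). \<alpha> \<in> {1..k} \<rightarrow>\<^sub>E {1..m} \<and> \<beta> \<in> {1..n} \<rightarrow>\<^sub>E {1..m} \<and>
     inj_on \<alpha> {1..k} \<and> inj_on \<beta> {1..n} \<and> \<alpha> ` {1..k} \<union> \<beta> ` {1..n} = {1..m}}"

definition Gab where
  "Gab X I n k g h \<alpha> \<beta> = snd (lb_comp (conj_loc X I n g \<beta>) (conj_loc X I k h \<alpha>))"

lemma JS_D: assumes "(\<alpha>,\<beta>) \<in> JS n k m"
  shows "\<alpha> ` {1..k} \<subseteq> {1..m}" "\<beta> ` {1..n} \<subseteq> {1..m}" "inj_on \<alpha> {1..k}" "inj_on \<beta> {1..n}"
    "\<alpha> ` {1..k} \<union> \<beta> ` {1..n} = {1..m}" "\<alpha> \<in> {1..k} \<rightarrow>\<^sub>E {1..m}" "\<beta> \<in> {1..n} \<rightarrow>\<^sub>E {1..m}"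
  using assms by (auto simp: JS_def)

lemma Gab_gfix:
  assumes ab: "(\<alpha>,\<beta>) \<in> JS n k m" and g: "gfix X I n g" and h: "gfix X I k h"
  shows "gfix X I m (Gab X I n k g h \<alpha> \<beta>)"
proof -
  note J = JS_D[OF ab]
  have "Gab X I n k g h \<alpha> \<beta> v = v" if "v \<notin> OmegaF X I {1..m}" for v
  proof -
    have "v \<notin> OmegaF X I (\<alpha> ` {1..k})" "v \<notin> OmegaF X I (\<beta> ` {1..n})"
      using that OmegaF_mono[OF J(1), of v X I] OmegaF_mono[OF J(2), of v X I] by blast+
    thus ?thesis by (simp add: Gab_def lb_comp_def conj_out)
  qed
  moreover have "Gab X I n k g h \<alpha> \<beta> v \<in> OmegaF X I {1..m}" if "v \<in> OmegaF X I {1..m}" for v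
    using conj_maps_sup[OF g J(2) conj_maps_sup[OF h J(1) that]] by (simp add: Gab_def lb_comp_def)
  ultimately show ?thesis by (simp add: gfix_def)
qed

lemma pattern:
  assumes ab: "(\<alpha>,\<beta>) \<in> JS n k m" and r: "inj_on \<rho> {1..m}" and g: "gfix X I n g" and h: "gfix X I k h"
  shows "conj_loc X I m (Gab X I n k g h \<alpha> \<beta>) \<rho> =
         lb_comp (conj_loc X I n g (\<rho> \<circ> \<beta>)) (conj_loc X I k h (\<rho> \<circ> \<alpha>))"
proof -
  note J = JS_D[OF ab]
  have e: "lb_comp (conj_loc X I n g \<beta>) (conj_loc X I k h \<alpha>) = ({1..m}, Gab X I n k g h \<alpha> \<beta>)"
    using J(5) by (simp add: lb_comp_def Gab_def Un_commute)
  have "conj_loc X I m (Gab X I n k g h \<alpha> \<beta>) \<rho> = tr X I m \<rho> (lb_comp (conj_loc X I n g \<beta>) (conj_loc X I k h \<alpha>))"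
    by (simp only: conj_tr[of X I m "Gab X I n k g h \<alpha> \<beta>" \<rho>] e)
  also have "\<dots> = lb_comp (tr X I m \<rho> (conj_loc X I n g \<beta>)) (tr X I m \<rho> (conj_loc X I k h \<alpha>))"
    by (rule tr_comp[OF r]) (rule conj_maps_sup[OF h J(1)])
  also have "\<dots> = lb_comp (conj_loc X I n g (\<rho> \<circ> \<beta>)) (conj_loc X I k h (\<rho> \<circ> \<alpha>))"
    using tr_conj[OF r J(2) J(4) g] tr_conj[OF r J(1) J(3) h] by simp
  finally show ?thesis .
qed


lemma ext_perm:
  assumes inj: "inj_on \<sigma> {1..n}" and sub: "\<sigma> ` {1..n} \<subseteq> {1..}"
  shows "\<exists>s\<in>S_inf. \<forall>j\<in>{1..n}. s j = \<sigma> j"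
proof -
  define J where "J = {1..n::nat}"
  define A where "A = J \<union> \<sigma> ` J"
  have fA: "finite A" by (simp add: A_def J_def)
  have cJ: "card J = n" "card (\<sigma> ` J) = n" using inj by (simp_all add: J_def card_image)
  have c1: "card (A - J) = card A - n" using fA cJ by (simp add: A_def card_Diff_subset)
  have c2: "card (A - \<sigma> ` J) = card A - n" using fA cJ by (simp add: A_def card_Diff_subset)
  have fin: "finite (A - J)" "finite (A - \<sigma> ` J)" using fA by auto
  obtain \<gamma> where gam: "bij_betw \<gamma> (A - J) (A - \<sigma> ` J)"
    using finite_same_card_bij[OF fin] c1 c2 by metis
  define s where "s x = (if x \<in> J then \<sigma> x else if x \<in> A - J then \<gamma> x else x)" for x
  have b0: "bij_betw \<sigma> J (\<sigma> ` J)" using inj by (simp add: J_def inj_on_imp_bij_betw)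
  have b1: "bij_betw s J (\<sigma> ` J)"
    using b0 by (rule bij_betw_cong[THEN iffD1, rotated]) (simp add: s_def)
  have b2: "bij_betw s (A - J) (A - \<sigma> ` J)"
    using gam by (rule bij_betw_cong[THEN iffD1, rotated]) (simp add: s_def)
  have dj: "\<sigma> ` J \<inter> (A - \<sigma> ` J) = {}" by blast
  have b3: "bij_betw s (J \<union> (A - J)) (\<sigma> ` J \<union> (A - \<sigma> ` J))"
    by (rule bij_betw_combine[OF b1 b2 dj])
  have e1: "J \<union> (A - J) = A" "\<sigma> ` J \<union> (A - \<sigma> ` J) = A" unfolding A_def by blast+
  have "bij_betw s A A" using b3 unfolding e1 .
  moreover have "s x = x" if "x \<notin> A" for x using that unfolding s_def A_def by simp
  ultimately have "s permutes A" by (rule bij_imp_permutes)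
  moreover have "A \<subseteq> {1..}" using sub unfolding A_def J_def by auto
  ultimately have p: "s permutes {1..}" by (rule permutes_subset)
  have "{v. s v \<noteq> v} \<subseteq> A" unfolding s_def A_def by auto
  hence "fin_supp s" using fA unfolding fin_supp_def by (rule finite_subset)
  with p have "s \<in> S_inf" by (simp add: S_inf_def)
  moreover have "\<forall>j\<in>{1..n}. s j = \<sigma> j" by (simp add: s_def J_def)
  ultimately show ?thesis by blast
qed

lemma S_inf_inv: assumes "s \<in> S_inf" shows "inv s \<in> S_inf"
proof -
  have p: "s permutes {1..}" and f: "fin_supp s" using assms by (auto simp: S_inf_def)
  have "{v. inv s v \<noteq> v} = {v. s v \<noteq> v}"
    using permutes_inverses[OF p] by (metis)
  thus ?thesis using f permutes_inv[OF p] by (simp add: S_inf_def fin_supp_def)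
qed

lemma conj_in_G:
  assumes adm: "admissible_group X I G" and gG: "g \<in> Gn X I G n"
    and inj: "inj_on \<sigma> {1..n}" and sub: "\<sigma> ` {1..n} \<subseteq> {1..}"
  shows "snd (conj_loc X I n g \<sigma>) \<in> G"
proof -
  obtain s where s: "s \<in> S_inf" and se: "\<And>j. j \<in> {1..n} \<Longrightarrow> s j = \<sigma> j" using ext_perm[OF inj sub] by blast
  have p: "s permutes {1..}" using s by (simp add: S_inf_def)
  have si: "\<And>x. s (inv s x) = x" "\<And>x. inv s (s x) = x" using permutes_inverses[OF p] by auto
  have gf: "gfix X I n g" by (rule Gn_gfix[OF adm gG])
  have g: "g \<in> G" using gG by (simp add: Gn_def)
  have eq: "snd (conj_loc X I n g \<sigma>) v = (liftN s \<circ> g \<circ> liftN (inv s)) v" for v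
  proof (cases v rule: pt_cases)
    case (1 x)
    show ?thesis
    proof (cases "x \<in> X")
      case True
      have "g (Inl x) \<in> OmegaF X I {1..n}" by (rule gfixD2[OF _ gf]) (simp add: True)
      hence "liftN \<sigma> (g (Inl x)) = liftN s (g (Inl x))" by (rule liftN_cong) (simp add: se)
      then show ?thesis using True 1 by (simp add: conj_in)
    next
      case False
      have "g (Inl x) = Inl x" by (rule gfixD1[OF gf]) (simp add: False)
      then show ?thesis using False 1 by (simp add: conj_out)
    qed
  next
    case (2 i m)
    show ?thesis
    proof (cases "i \<in> I \<and> m \<in> \<sigma> ` {1..n}")
      case True
      then obtain j where j: "j \<in> {1..n}" "m = \<sigma> j" by auto
      have ij1: "inv_into {1..n} \<sigma> m = j" using j inj by simp
      have "inv s m = inv s (s j)" using j se[of j] by simp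
      hence ij2: "inv s m = j" using si(2)[of j] by simp
      note ij = ij1 ij2
      have "g (Inr (i,j)) \<in> OmegaF X I {1..n}" by (rule gfixD2[OF _ gf]) (use True j in simp)
      hence "liftN \<sigma> (g (Inr (i,j))) = liftN s (g (Inr (i,j)))" by (rule liftN_cong) (simp add: se)
      then show ?thesis using True 2 ij by (simp add: conj_in)
    next
      case False
      have "Inr (i, inv s m) \<notin> OmegaF X I {1..n}"
      proof
        assume "Inr (i, inv s m) \<in> OmegaF X I {1..n}"
        hence "i \<in> I" "inv s m \<in> {1..n}" by auto
        moreover have "m = \<sigma> (inv s m)" using se[of "inv s m"] si \<open>inv s m \<in> {1..n}\<close> by simp
        ultimately show False using False by auto
      qed
      hence "g (Inr (i, inv s m)) = Inr (i, inv s m)" by (rule gfixD1[OF gf])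
      then show ?thesis using False 2 si by (simp add: conj_out)
    qed
  qed
  have G1: "liftN s \<in> G" "liftN (inv s) \<in> G" using adm s S_inf_inv[OF s] by (auto simp: admissible_group_def)
  have "liftN s \<circ> g \<circ> liftN (inv s) \<in> G" using adm G1 g by (auto simp: admissible_group_def)
  moreover have "snd (conj_loc X I n g \<sigma>) = liftN s \<circ> g \<circ> liftN (inv s)" using eq by (rule ext)
  ultimately show ?thesis by simp
qed

lemma Gab_Gn:
  assumes adm: "admissible_group X I G" and ab: "(\<alpha>,\<beta>) \<in> JS n k m"
    and g: "g \<in> Gn X I G n" and h: "h \<in> Gn X I G k"
  shows "Gab X I n k g h \<alpha> \<beta> \<in> Gn X I G m"
proof -
  note J = JS_D[OF ab]
  have s1: "\<beta> ` {1..n} \<subseteq> {1..}" "\<alpha> ` {1..k} \<subseteq> {1..}" using J(1,2) by auto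
  have "snd (conj_loc X I n g \<beta>) \<in> G" by (rule conj_in_G[OF adm g J(4) s1(1)])
  moreover have "snd (conj_loc X I k h \<alpha>) \<in> G" by (rule conj_in_G[OF adm h J(3) s1(2)])
  ultimately have "Gab X I n k g h \<alpha> \<beta> \<in> G" using adm by (simp add: Gab_def lb_comp_def admissible_group_def)
  moreover have "gfix X I m (Gab X I n k g h \<alpha> \<beta>)"
    by (rule Gab_gfix[OF ab Gn_gfix[OF adm g] Gn_gfix[OF adm h]])
  ultimately show ?thesis by (simp add: Gn_def gfix_def Vn_def)
qed


definition Inj :: "nat \<Rightarrow> (nat \<Rightarrow> nat) set" where
  "Inj n = {\<sigma> \<in> {1..n} \<rightarrow>\<^sub>E {1..}. inj_on \<sigma> {1..n}}"

definition Pairs where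
  "Pairs X I n k g h r = {(\<sigma>,\<tau>). \<sigma> \<in> Inj n \<and> \<tau> \<in> Inj k \<and>
     lb_comp (conj_loc X I n g \<sigma>) (conj_loc X I k h \<tau>) = r}"

abbreviation fib where "fib X I n g p \<equiv> {\<sigma> \<in> Inj n. conj_loc X I n g \<sigma> = p}"

lemma Bser_card: "Bser X I n g r = of_nat (card (fib X I n g r))"
  unfolding Bser_def Inj_def by (simp add: conj_assoc)

lemma fib_finite: "finite (fib X I n g p)"
proof (cases "finite (fst p)")
  case True
  have "fib X I n g p \<subseteq> {1..n} \<rightarrow>\<^sub>E fst p" by (auto simp: Inj_def PiE_def)
  moreover have "finite ({1..n} \<rightarrow>\<^sub>E fst p)" using True by (simp add: finite_PiE)
  ultimately show ?thesis by (rule finite_subset)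
next
  case False
  have "fib X I n g p = {}"
  proof (rule ccontr)
    assume "fib X I n g p \<noteq> {}"
    then obtain \<sigma> where "conj_loc X I n g \<sigma> = p" by blast
    hence "fst p = \<sigma> ` {1..n}" by auto
    thus False using False by simp
  qed
  thus ?thesis by (simp only: finite.emptyI)
qed

lemma Pairs_fst: "(\<sigma>,\<tau>) \<in> Pairs X I n k g h r \<Longrightarrow> fst r = \<sigma> ` {1..n} \<union> \<tau> ` {1..k}"
  by (auto simp: Pairs_def lb_comp_def)

lemma Pairs_finite: "finite (Pairs X I n k g h r)"
proof (cases "finite (fst r)")
  case True
  have "Pairs X I n k g h r \<subseteq> ({1..n} \<rightarrow>\<^sub>E fst r) \<times> ({1..k} \<rightarrow>\<^sub>E fst r)"
  proof
    fix x assume x: "x \<in> Pairs X I n k g h r"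
    obtain \<sigma> \<tau> where xe: "x = (\<sigma>,\<tau>)" by (cases x)
    have f: "fst r = \<sigma> ` {1..n} \<union> \<tau> ` {1..k}" using x xe Pairs_fst by blast
    show "x \<in> ({1..n} \<rightarrow>\<^sub>E fst r) \<times> ({1..k} \<rightarrow>\<^sub>E fst r)" using x f unfolding xe
      by (auto simp: Pairs_def Inj_def PiE_def)
  qed
  moreover have "finite (({1..n} \<rightarrow>\<^sub>E fst r) \<times> ({1..k} \<rightarrow>\<^sub>E fst r))" using True by (simp add: finite_PiE)
  ultimately show ?thesis by (rule finite_subset)
next
  case False
  have "Pairs X I n k g h r = {}" using False Pairs_fst by fastforce
  thus ?thesis by simp
qed

lemma conv_Bser:
  "conv (Bser X I n g) (Bser X I k h) r = of_nat (card (Pairs X I n k g h r))"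
proof -
  define P where "P = Pairs X I n k g h r"
  define T where "T = {(p,q). Bser X I n g p \<noteq> 0 \<and> Bser X I k h q \<noteq> 0 \<and> lb_comp p q = r}"
  define \<Phi> where "\<Phi> = (\<lambda>(\<sigma>,\<tau>). (conj_loc X I n g \<sigma>, conj_loc X I k h \<tau>))"
  have nz: "Bser X I n g p \<noteq> 0 \<longleftrightarrow> fib X I n g p \<noteq> {}" for n g p
    by (simp add: Bser_card fib_finite card_eq_0_iff)
  have TP: "T = \<Phi> ` P"
  proof
    show "T \<subseteq> \<Phi> ` P"
    proof
      fix y assume y: "y \<in> T"
      obtain p q where ye: "y = (p,q)" by (cases y)
      obtain \<sigma> where s: "\<sigma> \<in> Inj n" "conj_loc X I n g \<sigma> = p" using y ye nz by (auto simp: T_def)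
      obtain \<tau> where t: "\<tau> \<in> Inj k" "conj_loc X I k h \<tau> = q" using y ye nz by (auto simp: T_def)
      have "(\<sigma>,\<tau>) \<in> P" using s t y ye by (auto simp: P_def Pairs_def T_def)
      moreover have "\<Phi> (\<sigma>,\<tau>) = y" using s t ye by (simp add: \<Phi>_def)
      ultimately show "y \<in> \<Phi> ` P" by force
    qed
    show "\<Phi> ` P \<subseteq> T"
    proof
      fix y assume "y \<in> \<Phi> ` P"
      then obtain \<sigma> \<tau> where st: "(\<sigma>,\<tau>) \<in> P" "y = \<Phi> (\<sigma>,\<tau>)" by auto
      have "fib X I n g (conj_loc X I n g \<sigma>) \<noteq> {}" "fib X I k h (conj_loc X I k h \<tau>) \<noteq> {}"
        using st by (auto simp: P_def Pairs_def)
      thus "y \<in> T" using st nz by (auto simp: T_def P_def Pairs_def \<Phi>_def)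
    qed
  qed
  have fP: "finite P" by (simp add: P_def Pairs_finite)
  hence fT: "finite T" by (simp add: TP)
  have fibs: "{x \<in> P. \<Phi> x = y} = fib X I n g (fst y) \<times> fib X I k h (snd y)" if "y \<in> T" for y
    using that by (auto simp: P_def Pairs_def T_def \<Phi>_def)
  have "conv (Bser X I n g) (Bser X I k h) r = (\<Sum>(p,q)\<in>T. Bser X I n g p * Bser X I k h q)"
    by (simp add: conv_def T_def)
  also have "\<dots> = (\<Sum>y\<in>T. of_nat (card {x \<in> P. \<Phi> x = y}))"
    by (rule sum.cong[OF refl]) (auto simp: fibs Bser_card card_cartesian_product)
  also have "\<dots> = of_nat (\<Sum>y\<in>T. card {x \<in> P. \<Phi> x = y})" by simp
  also have "(\<Sum>y\<in>T. card {x \<in> P. \<Phi> x = y}) = (\<Sum>y\<in>T. \<Sum>x\<in>{x \<in> P. \<Phi> x = y}. (1::nat))"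
    by simp
  also have "\<dots> = (\<Sum>x\<in>P. 1)" by (rule sum.group[OF fP fT]) (simp add: TP)
  also have "\<dots> = card P" by simp
  finally show ?thesis by (simp add: P_def)
qed


lemma card_NB:
  assumes fU: "finite U" and cU: "card U = m" and sU: "U \<subseteq> {1..}"
  shows "card {\<rho> \<in> Inj m. \<rho> ` {1..m} = U} = fact m"
proof -
  define J where "J = {1..m::nat}"
  have cJ: "card J = m" "finite J" by (auto simp: J_def)
  obtain f where f: "bij_betw f J U" using finite_same_card_bij[OF cJ(2) fU] cJ cU by metis
  define \<rho>0 where "\<rho>0 = restrict f J"
  have r0: "bij_betw \<rho>0 J U" using f by (rule bij_betw_cong[THEN iffD1, rotated]) (simp add: \<rho>0_def)
  have r0i: "inj_on \<rho>0 J" "\<rho>0 ` J = U" using r0 by (auto simp: bij_betw_def)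
  define NB where "NB = {\<rho> \<in> Inj m. \<rho> ` {1..m} = U}"
  define \<Psi> where "\<Psi> p = restrict (\<rho>0 \<circ> p) J" for p :: "nat \<Rightarrow> nat"
  have "bij_betw \<Psi> {p. p permutes J} NB"
  proof (rule bij_betw_imageI)
    show "inj_on \<Psi> {p. p permutes J}"
    proof (rule inj_onI)
      fix p p' assume p: "p \<in> {p. p permutes J}" and p': "p' \<in> {p. p permutes J}" and e: "\<Psi> p = \<Psi> p'"
      show "p = p'"
      proof
        fix x show "p x = p' x"
        proof (cases "x \<in> J")
          case True
          have "\<Psi> p x = \<Psi> p' x" using e by simp
          hence "\<rho>0 (p x) = \<rho>0 (p' x)" using True by (simp add: \<Psi>_def)
          moreover have "p x \<in> J" "p' x \<in> J" using p p' True by (auto simp: permutes_in_image)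
          ultimately show ?thesis using r0i(1) by (auto dest: inj_onD)
        next
          case False thus ?thesis using p p' by (auto simp: permutes_not_in)
        qed
      qed
    qed
    show "\<Psi> ` {p. p permutes J} = NB"
    proof
      show "\<Psi> ` {p. p permutes J} \<subseteq> NB"
      proof
        fix y assume "y \<in> \<Psi> ` {p. p permutes J}"
        then obtain p where p: "p permutes J" and y: "y = \<Psi> p" by auto
        have pJ: "p ` J = J" using p by (rule permutes_image)
        have ip: "inj_on p J" using permutes_inj[OF p] by (auto intro: inj_on_subset)
        have "y ` J = \<rho>0 ` p ` J" by (auto simp: y \<Psi>_def)
        hence im: "y ` J = U" using pJ r0i(2) by simp
        have inj: "inj_on y J" unfolding y \<Psi>_def
          using comp_inj_on[OF ip] r0i(1) pJ inj_on_restrict_eq by (metis)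
        have "y \<in> J \<rightarrow>\<^sub>E {1..}" using im sU by (auto simp: y \<Psi>_def)
        thus "y \<in> NB" using im inj by (simp add: NB_def Inj_def J_def)
      qed
      show "NB \<subseteq> \<Psi> ` {p. p permutes J}"
      proof
        fix \<rho> assume r: "\<rho> \<in> NB"
        have rI: "\<rho> \<in> J \<rightarrow>\<^sub>E {1..}" "inj_on \<rho> J" "\<rho> ` J = U" using r by (auto simp: NB_def Inj_def J_def)
        define p where "p x = (if x \<in> J then inv_into J \<rho>0 (\<rho> x) else x)" for x
        have b1: "bij_betw \<rho> J U" using rI by (simp add: bij_betw_def)
        have b2: "bij_betw (inv_into J \<rho>0 \<circ> \<rho>) J J" using bij_betw_trans[OF b1 bij_betw_inv_into[OF r0]] .
        have "bij_betw p J J" using b2 by (rule bij_betw_cong[THEN iffD1, rotated]) (simp add: p_def)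
        hence pp: "p permutes J" by (rule bij_imp_permutes) (simp add: p_def)
        have "\<Psi> p = \<rho>"
        proof
          fix x show "\<Psi> p x = \<rho> x"
          proof (cases "x \<in> J")
            case True
            have "\<rho> x \<in> \<rho>0 ` J" using True rI(3) r0i(2) by auto
            thus ?thesis using True by (simp add: \<Psi>_def p_def f_inv_into_f)
          next
            case False thus ?thesis using rI(1) by (auto simp: \<Psi>_def PiE_def extensional_def)
          qed
        qed
        thus "\<rho> \<in> \<Psi> ` {p. p permutes J}" using pp by force
      qed
    qed
  qed
  hence "card {p. p permutes J} = card NB" by (rule bij_betw_same_card)
  thus ?thesis using card_permutations[OF cJ] by (simp add: NB_def)
qed


definition Phi :: "nat \<Rightarrow> nat \<Rightarrow> (nat \<Rightarrow> nat) \<Rightarrow> (nat \<Rightarrow> nat) \<Rightarrow> (nat \<Rightarrow> nat) \<Rightarrow> (nat \<Rightarrow> nat) \<times> (nat \<Rightarrow> nat)" where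
  "Phi n k \<alpha> \<beta> \<rho> = (restrict (\<rho> \<circ> \<beta>) {1..n}, restrict (\<rho> \<circ> \<alpha>) {1..k})"

lemma Phi_Inj:
  assumes ab: "(\<alpha>,\<beta>) \<in> JS n k m" and r: "\<rho> \<in> Inj m"
  shows "fst (Phi n k \<alpha> \<beta> \<rho>) \<in> Inj n" "snd (Phi n k \<alpha> \<beta> \<rho>) \<in> Inj k"
proof -
  note J = JS_D[OF ab]
  have ri: "inj_on \<rho> {1..m}" using r by (simp add: Inj_def)
  have ri2: "\<rho> x \<in> {1..}" if "x \<in> {1..m}" for x using r that by (auto simp: Inj_def)
  have "inj_on (\<rho> \<circ> \<beta>) {1..n}" by (rule comp_inj_on[OF J(4) inj_on_subset[OF ri J(2)]])
  moreover have "(\<rho> \<circ> \<beta>) \<in> {1..n} \<rightarrow> {1..}" using J(2) ri2 by auto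
  ultimately show "fst (Phi n k \<alpha> \<beta> \<rho>) \<in> Inj n"
    by (simp add: Phi_def Inj_def)
  have "inj_on (\<rho> \<circ> \<alpha>) {1..k}" by (rule comp_inj_on[OF J(3) inj_on_subset[OF ri J(1)]])
  moreover have "(\<rho> \<circ> \<alpha>) \<in> {1..k} \<rightarrow> {1..}" using J(1) ri2 by auto
  ultimately show "snd (Phi n k \<alpha> \<beta> \<rho>) \<in> Inj k"
    by (simp add: Phi_def Inj_def)
qed

lemma Bser_Gab:
  assumes ab: "(\<alpha>,\<beta>) \<in> JS n k m" and g: "gfix X I n g" and h: "gfix X I k h"
  shows "Bser X I m (Gab X I n k g h \<alpha> \<beta>) r =
         of_nat (card {\<rho> \<in> Inj m. Phi n k \<alpha> \<beta> \<rho> \<in> Pairs X I n k g h r})"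
proof -
  have "fib X I m (Gab X I n k g h \<alpha> \<beta>) r = {\<rho> \<in> Inj m. Phi n k \<alpha> \<beta> \<rho> \<in> Pairs X I n k g h r}"
  proof (rule Collect_cong, rule conj_cong[OF refl])
    fix \<rho> assume r: "\<rho> \<in> Inj m"
    have ri: "inj_on \<rho> {1..m}" using r by (simp add: Inj_def)
    have c1: "conj_loc X I n g (fst (Phi n k \<alpha> \<beta> \<rho>)) = conj_loc X I n g (\<rho> \<circ> \<beta>)"
      by (rule conjloc_cong[OF _ g]) (simp add: Phi_def)
    have c2: "conj_loc X I k h (snd (Phi n k \<alpha> \<beta> \<rho>)) = conj_loc X I k h (\<rho> \<circ> \<alpha>)"
      by (rule conjloc_cong[OF _ h]) (simp add: Phi_def)
    have "Phi n k \<alpha> \<beta> \<rho> \<in> Pairs X I n k g h r \<longleftrightarrow>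
          lb_comp (conj_loc X I n g (\<rho> \<circ> \<beta>)) (conj_loc X I k h (\<rho> \<circ> \<alpha>)) = r"
      using Phi_Inj[OF ab r] c1 c2 by (cases "Phi n k \<alpha> \<beta> \<rho>") (auto simp: Pairs_def)
    thus "(conj_loc X I m (Gab X I n k g h \<alpha> \<beta>) \<rho> = r) = (Phi n k \<alpha> \<beta> \<rho> \<in> Pairs X I n k g h r)"
      using pattern[OF ab ri g h] by simp
  qed
  thus ?thesis by (simp add: Bser_card)
qed

lemma Phi_inj:
  assumes ab: "(\<alpha>,\<beta>) \<in> JS n k m"
  shows "inj_on (Phi n k \<alpha> \<beta>) (Inj m)"
proof (rule inj_onI)
  note J = JS_D[OF ab]
  fix \<rho> \<rho>' assume r: "\<rho> \<in> Inj m" "\<rho>' \<in> Inj m" and e: "Phi n k \<alpha> \<beta> \<rho> = Phi n k \<alpha> \<beta> \<rho>'"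
  have e1: "\<rho> (\<beta> j) = \<rho>' (\<beta> j)" if "j \<in> {1..n}" for j
  proof -
    have "fst (Phi n k \<alpha> \<beta> \<rho>) j = fst (Phi n k \<alpha> \<beta> \<rho>') j" using e by simp
    thus ?thesis using that by (simp add: Phi_def)
  qed
  have e2: "\<rho> (\<alpha> j) = \<rho>' (\<alpha> j)" if "j \<in> {1..k}" for j
  proof -
    have "snd (Phi n k \<alpha> \<beta> \<rho>) j = snd (Phi n k \<alpha> \<beta> \<rho>') j" using e by simp
    thus ?thesis using that by (simp add: Phi_def)
  qed
  have "\<rho> x = \<rho>' x" if "x \<in> {1..m}" for x
  proof -
    have "x \<in> \<alpha> ` {1..k} \<union> \<beta> ` {1..n}" using that J(5) by simp
    thus ?thesis using e1 e2 by blast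
  qed
  thus "\<rho> = \<rho>'" using r by (intro PiE_ext[of _ "{1..m}" "\<lambda>_. {1..}"]) (auto simp: Inj_def)
qed

lemma Phi_fst:
  assumes ab: "(\<alpha>,\<beta>) \<in> JS n k m" and r: "\<rho> \<in> Inj m" and P: "Phi n k \<alpha> \<beta> \<rho> \<in> Pairs X I n k g h r"
  shows "\<rho> ` {1..m} = fst r"
proof -
  note J = JS_D[OF ab]
  have "fst r = fst (Phi n k \<alpha> \<beta> \<rho>) ` {1..n} \<union> snd (Phi n k \<alpha> \<beta> \<rho>) ` {1..k}"
    using Pairs_fst[of "fst (Phi n k \<alpha> \<beta> \<rho>)" "snd (Phi n k \<alpha> \<beta> \<rho>)"] P by simp
  also have "\<dots> = \<rho> ` (\<beta> ` {1..n} \<union> \<alpha> ` {1..k})" by (auto simp: Phi_def)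
  also have "\<dots> = \<rho> ` {1..m}" using J(5) by (simp add: Un_commute)
  finally show ?thesis by simp
qed


lemma JS_finite: "finite (JS n k m)"
proof -
  have "JS n k m \<subseteq> ({1..k} \<rightarrow>\<^sub>E {1..m}) \<times> ({1..n} \<rightarrow>\<^sub>E {1..m})" by (auto simp: JS_def)
  moreover have "finite (({1..k} \<rightarrow>\<^sub>E {1..m}) \<times> ({1..n} \<rightarrow>\<^sub>E {1..m}))" by (simp add: finite_PiE)
  ultimately show ?thesis by (rule finite_subset)
qed

lemma sum_patterns:
  "(\<Sum>ab\<in>JS n k m. card {\<rho> \<in> Inj m. Phi n k (fst ab) (snd ab) \<rho> \<in> Pairs X I n k g h r}) =
   card (Pairs X I n k g h r) * card {\<rho> \<in> Inj m. \<rho> ` {1..m} = fst r}"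
proof -
  define S where "S ab = {\<rho> \<in> Inj m. Phi n k (fst ab) (snd ab) \<rho> \<in> Pairs X I n k g h r}" for ab
  define P where "P = Pairs X I n k g h r"
  define NB where "NB = {\<rho> \<in> Inj m. \<rho> ` {1..m} = fst r}"
  have Sfin: "finite (S ab)" if "ab \<in> JS n k m" for ab
  proof (cases "S ab = {}")
    case False
    then obtain \<rho>0 where r0: "\<rho>0 \<in> S ab" by blast
    obtain \<alpha> \<beta> where abe: "ab = (\<alpha>,\<beta>)" by (cases ab)
    have ab': "(\<alpha>,\<beta>) \<in> JS n k m" using that abe by simp
    have f0: "\<rho>0 ` {1..m} = fst r" using r0 by (intro Phi_fst[OF ab']) (auto simp: S_def abe)
    have "S ab \<subseteq> {1..m} \<rightarrow>\<^sub>E fst r"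
    proof
      fix \<rho> assume r: "\<rho> \<in> S ab"
      have "\<rho> ` {1..m} = fst r" using r by (intro Phi_fst[OF ab']) (auto simp: S_def abe)
      thus "\<rho> \<in> {1..m} \<rightarrow>\<^sub>E fst r" using r by (auto simp: S_def Inj_def PiE_def)
    qed
    moreover have "finite ({1..m} \<rightarrow>\<^sub>E fst r)" using f0[symmetric] by (simp add: finite_PiE)
    ultimately show ?thesis by (rule finite_subset)
  qed simp
  define F where "F x = (Phi n k (fst (fst x)) (snd (fst x)) (snd x), snd x)" for x
  have "bij_betw F (SIGMA ab:JS n k m. S ab) (P \<times> NB)"
  proof (rule bij_betw_imageI)
    show "inj_on F (SIGMA ab:JS n k m. S ab)"
    proof (rule inj_onI)
      fix x y assume x: "x \<in> (SIGMA ab:JS n k m. S ab)" and y: "y \<in> (SIGMA ab:JS n k m. S ab)"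
        and e: "F x = F y"
      obtain \<alpha> \<beta> \<rho> where xe: "x = ((\<alpha>,\<beta>),\<rho>)" by (metis prod.exhaust)
      obtain \<alpha>' \<beta>' \<rho>' where ye: "y = ((\<alpha>',\<beta>'),\<rho>')" by (metis prod.exhaust)
      have ab: "(\<alpha>,\<beta>) \<in> JS n k m" "(\<alpha>',\<beta>') \<in> JS n k m" "\<rho> \<in> Inj m"
        using x y by (auto simp: xe ye S_def)
      have rr: "\<rho>' = \<rho>" using e by (simp add: F_def xe ye)
      have e1: "restrict (\<rho> \<circ> \<beta>) {1..n} = restrict (\<rho> \<circ> \<beta>') {1..n}"
        "restrict (\<rho> \<circ> \<alpha>) {1..k} = restrict (\<rho> \<circ> \<alpha>') {1..k}"
        using e by (simp_all add: F_def xe ye rr Phi_def)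
      note J = JS_D[OF ab(1)] and J' = JS_D[OF ab(2)]
      have ri: "inj_on \<rho> {1..m}" using ab(3) by (simp add: Inj_def)
      have "\<beta> j = \<beta>' j" if "j \<in> {1..n}" for j
      proof -
        have "\<rho> (\<beta> j) = \<rho> (\<beta>' j)" using fun_cong[OF e1(1), of j] that by simp
        moreover have "\<beta> j \<in> {1..m}" "\<beta>' j \<in> {1..m}" using that J(2) J'(2) by (auto simp: image_subset_iff)
        ultimately show ?thesis using ri by (auto dest: inj_onD)
      qed
      hence "\<beta> = \<beta>'" using J(7) J'(7) by (intro PiE_ext) auto
      moreover have "\<alpha> j = \<alpha>' j" if "j \<in> {1..k}" for j
      proof -
        have "\<rho> (\<alpha> j) = \<rho> (\<alpha>' j)" using fun_cong[OF e1(2), of j] that by simp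
        moreover have "\<alpha> j \<in> {1..m}" "\<alpha>' j \<in> {1..m}" using that J(1) J'(1) by (auto simp: image_subset_iff)
        ultimately show ?thesis using ri by (auto dest: inj_onD)
      qed
      hence "\<alpha> = \<alpha>'" using J(6) J'(6) by (intro PiE_ext) auto
      ultimately show "x = y" by (simp add: xe ye rr)
    qed
    show "F ` (SIGMA ab:JS n k m. S ab) = P \<times> NB"
    proof
      show "F ` (SIGMA ab:JS n k m. S ab) \<subseteq> P \<times> NB"
      proof
        fix z assume "z \<in> F ` (SIGMA ab:JS n k m. S ab)"
        then obtain \<alpha> \<beta> \<rho> where ab: "(\<alpha>,\<beta>) \<in> JS n k m" "\<rho> \<in> S (\<alpha>,\<beta>)" and z: "z = F ((\<alpha>,\<beta>),\<rho>)"
          by force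
        have r: "\<rho> \<in> Inj m" "Phi n k \<alpha> \<beta> \<rho> \<in> P" using ab(2) by (auto simp: S_def P_def)
        have "\<rho> ` {1..m} = fst r" using Phi_fst[OF ab(1) r(1)] r(2) by (simp add: P_def)
        thus "z \<in> P \<times> NB" using r by (simp add: z F_def NB_def)
      qed
      show "P \<times> NB \<subseteq> F ` (SIGMA ab:JS n k m. S ab)"
      proof
        fix z assume z: "z \<in> P \<times> NB"
        obtain \<sigma> \<tau> \<rho> where ze: "z = ((\<sigma>,\<tau>),\<rho>)" by (metis prod.exhaust)
        have st: "(\<sigma>,\<tau>) \<in> P" and rN: "\<rho> \<in> NB" using z by (auto simp: ze)
        have sI: "\<sigma> \<in> Inj n" "\<tau> \<in> Inj k" using st by (auto simp: P_def Pairs_def)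
        have fr: "fst r = \<sigma> ` {1..n} \<union> \<tau> ` {1..k}" using st Pairs_fst by (simp add: P_def)
        have rI: "\<rho> \<in> Inj m" "\<rho> ` {1..m} = fst r" using rN by (auto simp: NB_def)
        have ri: "inj_on \<rho> {1..m}" using rI by (simp add: Inj_def)
        define \<beta> where "\<beta> = restrict (inv_into {1..m} \<rho> \<circ> \<sigma>) {1..n}"
        define \<alpha> where "\<alpha> = restrict (inv_into {1..m} \<rho> \<circ> \<tau>) {1..k}"
        have ss: "\<sigma> ` {1..n} \<subseteq> \<rho> ` {1..m}" "\<tau> ` {1..k} \<subseteq> \<rho> ` {1..m}" using fr rI(2) by auto
        have si: "inj_on \<sigma> {1..n}" "inj_on \<tau> {1..k}" using sI by (auto simp: Inj_def)
        have iv: "inj_on (inv_into {1..m} \<rho>) (\<rho> ` {1..m})" by (rule inj_on_inv_into) simp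
        have ii1: "inv_into {1..m} \<rho> (\<sigma> j) \<in> {1..m}" if "j\<in>{1..n}" for j
          by (rule inv_into_into) (use ss(1) that in blast)
        have ii2: "inv_into {1..m} \<rho> (\<tau> j) \<in> {1..m}" if "j\<in>{1..k}" for j
          by (rule inv_into_into) (use ss(2) that in blast)
        have b1: "\<beta> \<in> {1..n} \<rightarrow>\<^sub>E {1..m}" unfolding \<beta>_def restrict_PiE_iff using ii1 by auto
        have a1: "\<alpha> \<in> {1..k} \<rightarrow>\<^sub>E {1..m}" unfolding \<alpha>_def restrict_PiE_iff using ii2 by auto
        have b2: "inj_on \<beta> {1..n}" unfolding \<beta>_def inj_on_restrict_eq
          by (rule comp_inj_on[OF si(1) inj_on_subset[OF iv ss(1)]])
        have a2: "inj_on \<alpha> {1..k}" unfolding \<alpha>_def inj_on_restrict_eq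
          by (rule comp_inj_on[OF si(2) inj_on_subset[OF iv ss(2)]])
        have "\<alpha> ` {1..k} \<union> \<beta> ` {1..n} = inv_into {1..m} \<rho> ` (\<tau> ` {1..k} \<union> \<sigma> ` {1..n})"
          by (auto simp: \<alpha>_def \<beta>_def)
        also have "\<dots> = inv_into {1..m} \<rho> ` \<rho> ` {1..m}" using fr rI(2) by (simp add: Un_commute)
        also have "\<dots> = {1..m}" using ri by simp
        finally have a3: "\<alpha> ` {1..k} \<union> \<beta> ` {1..n} = {1..m}" .
        have abJS: "(\<alpha>,\<beta>) \<in> JS n k m" using a1 b1 a2 b2 a3 by (simp add: JS_def)
        have ph1: "restrict (\<rho> \<circ> \<beta>) {1..n} = \<sigma>"
        proof (rule PiE_ext[of _ "{1..n}" "\<lambda>_. {1..}"])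
          show "restrict (\<rho> \<circ> \<beta>) {1..n} \<in> {1..n} \<rightarrow>\<^sub>E {1..}" using rI(1) b1 by (auto simp: Inj_def)
          show "\<sigma> \<in> {1..n} \<rightarrow>\<^sub>E {1..}" using sI by (simp add: Inj_def)
          fix j assume j: "j \<in> {1..n}"
          have "\<sigma> j \<in> \<rho> ` {1..m}" using ss(1) j by auto
          thus "restrict (\<rho> \<circ> \<beta>) {1..n} j = \<sigma> j" using j by (simp add: \<beta>_def f_inv_into_f)
        qed
        have ph2: "restrict (\<rho> \<circ> \<alpha>) {1..k} = \<tau>"
        proof (rule PiE_ext[of _ "{1..k}" "\<lambda>_. {1..}"])
          show "restrict (\<rho> \<circ> \<alpha>) {1..k} \<in> {1..k} \<rightarrow>\<^sub>E {1..}" using rI(1) a1 by (auto simp: Inj_def)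
          show "\<tau> \<in> {1..k} \<rightarrow>\<^sub>E {1..}" using sI by (simp add: Inj_def)
          fix j assume j: "j \<in> {1..k}"
          have "\<tau> j \<in> \<rho> ` {1..m}" using ss(2) j by auto
          thus "restrict (\<rho> \<circ> \<alpha>) {1..k} j = \<tau> j" using j by (simp add: \<alpha>_def f_inv_into_f)
        qed
        have ph: "Phi n k \<alpha> \<beta> \<rho> = (\<sigma>,\<tau>)" using ph1 ph2 by (simp add: Phi_def)
        have "\<rho> \<in> S (\<alpha>,\<beta>)" using rI(1) ph st by (simp add: S_def P_def)
        hence "((\<alpha>,\<beta>),\<rho>) \<in> (SIGMA ab:JS n k m. S ab)" using abJS by simp
        moreover have "F ((\<alpha>,\<beta>),\<rho>) = z" using ph by (simp add: F_def ze)
        ultimately show "z \<in> F ` (SIGMA ab:JS n k m. S ab)" by (metis image_eqI)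
      qed
    qed
  qed
  hence "card (SIGMA ab:JS n k m. S ab) = card (P \<times> NB)" by (rule bij_betw_same_card)
  moreover have "card (SIGMA ab:JS n k m. S ab) = (\<Sum>ab\<in>JS n k m. card (S ab))"
    using JS_finite Sfin by (simp add: card_SigmaI)
  ultimately show ?thesis by (simp add: S_def P_def NB_def card_cartesian_product)
qed


definition DPairs where
  "DPairs X I n k g h r = {x \<in> Pairs X I n k g h r. fst x ` {1..n} \<inter> snd x ` {1..k} = {}}"

definition al0 :: "nat \<Rightarrow> nat \<Rightarrow> nat" where "al0 k = restrict (\<lambda>j. j) {1..k}"
definition be0 :: "nat \<Rightarrow> nat \<Rightarrow> nat \<Rightarrow> nat" where "be0 n k = restrict (\<lambda>j. j + k) {1..n}"

lemma JS0: "(al0 k, be0 n k) \<in> JS n k (n+k)"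
proof -
  have "al0 k ` {1..k} \<union> be0 n k ` {1..n} = {1..n+k}"
  proof
    show "al0 k ` {1..k} \<union> be0 n k ` {1..n} \<subseteq> {1..n+k}" by (auto simp: al0_def be0_def)
    show "{1..n+k} \<subseteq> al0 k ` {1..k} \<union> be0 n k ` {1..n}"
    proof
      fix x assume x: "x \<in> {1..n+k}"
      show "x \<in> al0 k ` {1..k} \<union> be0 n k ` {1..n}"
      proof (cases "x \<le> k")
        case True thus ?thesis using x by (auto simp: al0_def image_def)
      next
        case False
        hence "x = be0 n k (x - k)" "x - k \<in> {1..n}" using x by (auto simp: be0_def)
        thus ?thesis by blast
      qed
    qed
  qed
  moreover have "inj_on (al0 k) {1..k}" "inj_on (be0 n k) {1..n}" by (auto simp: al0_def be0_def inj_on_def)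
  ultimately show ?thesis by (auto simp: JS_def al0_def be0_def)
qed

lemma Bser_lead:
  assumes g: "gfix X I n g" and h: "gfix X I k h"
  shows "Bser X I (n+k) (Gab X I n k g h (al0 k) (be0 n k)) r = of_nat (card (DPairs X I n k g h r))"
proof -
  define A where "A = {\<rho> \<in> Inj (n+k). Phi n k (al0 k) (be0 n k) \<rho> \<in> Pairs X I n k g h r}"
  have "bij_betw (Phi n k (al0 k) (be0 n k)) A (DPairs X I n k g h r)"
  proof (rule bij_betw_imageI)
    show "inj_on (Phi n k (al0 k) (be0 n k)) A"
      using Phi_inj[OF JS0] by (rule inj_on_subset) (auto simp: A_def)
    show "Phi n k (al0 k) (be0 n k) ` A = DPairs X I n k g h r"
    proof
      show "Phi n k (al0 k) (be0 n k) ` A \<subseteq> DPairs X I n k g h r"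
      proof
        fix z assume "z \<in> Phi n k (al0 k) (be0 n k) ` A"
        then obtain \<rho> where r: "\<rho> \<in> A" and z: "z = Phi n k (al0 k) (be0 n k) \<rho>" by auto
        have ri: "inj_on \<rho> {1..n+k}" using r by (simp add: A_def Inj_def)
        have "fst z ` {1..n} \<inter> snd z ` {1..k} = {}"
        proof (rule ccontr)
          assume "fst z ` {1..n} \<inter> snd z ` {1..k} \<noteq> {}"
          then obtain j j' where j: "j \<in> {1..n}" "j' \<in> {1..k}" "\<rho> (j + k) = \<rho> j'"
            by (auto simp: z Phi_def al0_def be0_def) blast
          have "j + k \<in> {1..n+k}" "j' \<in> {1..n+k}" using j by auto
          hence "j + k = j'" using ri j(3) by (auto dest: inj_onD)
          thus False using j by auto
        qed
        thus "z \<in> DPairs X I n k g h r" using r by (simp add: z A_def DPairs_def)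
      qed
      show "DPairs X I n k g h r \<subseteq> Phi n k (al0 k) (be0 n k) ` A"
      proof
        fix z assume z: "z \<in> DPairs X I n k g h r"
        obtain \<sigma> \<tau> where ze: "z = (\<sigma>,\<tau>)" by (cases z)
        have P: "(\<sigma>,\<tau>) \<in> Pairs X I n k g h r" and dj: "\<sigma> ` {1..n} \<inter> \<tau> ` {1..k} = {}"
          using z by (auto simp: ze DPairs_def)
        have sI: "\<sigma> \<in> {1..n} \<rightarrow>\<^sub>E {1..}" "inj_on \<sigma> {1..n}" "\<tau> \<in> {1..k} \<rightarrow>\<^sub>E {1..}" "inj_on \<tau> {1..k}"
          using P by (auto simp: Pairs_def Inj_def)
        define \<rho> where "\<rho> = restrict (\<lambda>j. if j \<le> k then \<tau> j else \<sigma> (j - k)) {1..n+k}"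
        have r1: "\<rho> \<in> {1..n+k} \<rightarrow>\<^sub>E {1..}"
          unfolding \<rho>_def restrict_PiE_iff
        proof
          fix j assume j: "j \<in> {1..n+k}"
          show "(if j \<le> k then \<tau> j else \<sigma> (j - k)) \<in> {1..}"
          proof (cases "j \<le> k")
            case True hence "j \<in> {1..k}" using j by auto
            thus ?thesis using True PiE_mem[OF sI(3)] by simp
          next
            case False hence "j - k \<in> {1..n}" using j by auto
            thus ?thesis using False PiE_mem[OF sI(1)] by simp
          qed
        qed
        have r2: "inj_on \<rho> {1..n+k}"
        proof (rule inj_onI)
          fix x y assume x: "x \<in> {1..n+k}" and y: "y \<in> {1..n+k}" and e: "\<rho> x = \<rho> y"
          show "x = y"
          proof (cases "x \<le> k"; cases "y \<le> k")
            assume "x \<le> k" "y \<le> k"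
            thus ?thesis using e x y sI(4) by (auto simp: \<rho>_def dest: inj_onD)
          next
            assume a: "x \<le> k" "\<not> y \<le> k"
            hence "\<tau> x = \<sigma> (y - k)" "x \<in> {1..k}" "y - k \<in> {1..n}" using e x y by (auto simp: \<rho>_def)
            thus ?thesis using dj by blast
          next
            assume a: "\<not> x \<le> k" "y \<le> k"
            hence "\<sigma> (x - k) = \<tau> y" "y \<in> {1..k}" "x - k \<in> {1..n}" using e x y by (auto simp: \<rho>_def)
            thus ?thesis using dj by blast
          next
            assume a: "\<not> x \<le> k" "\<not> y \<le> k"
            hence "\<sigma> (x - k) = \<sigma> (y - k)" "x - k \<in> {1..n}" "y - k \<in> {1..n}" using e x y by (auto simp: \<rho>_def)
            hence "x - k = y - k" using sI(2) by (auto dest: inj_onD)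
            thus ?thesis using a by simp
          qed
        qed
        have ph1: "restrict (\<rho> \<circ> be0 n k) {1..n} = \<sigma>"
        proof (rule PiE_ext[OF _ sI(1)])
          show "restrict (\<rho> \<circ> be0 n k) {1..n} \<in> {1..n} \<rightarrow>\<^sub>E {1..}"
            unfolding restrict_PiE_iff using r1 by (auto simp: be0_def PiE_def Pi_def)
          fix j assume "j \<in> {1..n}" thus "restrict (\<rho> \<circ> be0 n k) {1..n} j = \<sigma> j"
            by (simp add: \<rho>_def be0_def)
        qed
        have ph2: "restrict (\<rho> \<circ> al0 k) {1..k} = \<tau>"
        proof (rule PiE_ext[OF _ sI(3)])
          show "restrict (\<rho> \<circ> al0 k) {1..k} \<in> {1..k} \<rightarrow>\<^sub>E {1..}"
            unfolding restrict_PiE_iff using r1 by (auto simp: al0_def PiE_def Pi_def)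
          fix j assume "j \<in> {1..k}" thus "restrict (\<rho> \<circ> al0 k) {1..k} j = \<tau> j"
            by (simp add: \<rho>_def al0_def)
        qed
        have ph: "Phi n k (al0 k) (be0 n k) \<rho> = z" using ph1 ph2 by (simp add: Phi_def ze)
        have "\<rho> \<in> A" using r1 r2 ph P by (simp add: A_def Inj_def ze)
        thus "z \<in> Phi n k (al0 k) (be0 n k) ` A" using ph by (metis image_eqI)
      qed
    qed
  qed
  hence "card A = card (DPairs X I n k g h r)" by (rule bij_betw_same_card)
  thus ?thesis using Bser_Gab[OF JS0 g h] by (simp add: A_def)
qed


lemma Pairs_card_union:
  assumes "(\<sigma>,\<tau>) \<in> Pairs X I n k g h r"
  shows "card (fst r) + card (\<sigma> ` {1..n} \<inter> \<tau> ` {1..k}) = n + k" "finite (fst r)" "fst r \<subseteq> {1..}"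
proof -
  have sI: "\<sigma> \<in> {1..n} \<rightarrow>\<^sub>E {1..}" "inj_on \<sigma> {1..n}" "\<tau> \<in> {1..k} \<rightarrow>\<^sub>E {1..}" "inj_on \<tau> {1..k}"
    using assms by (auto simp: Pairs_def Inj_def)
  have fr: "fst r = \<sigma> ` {1..n} \<union> \<tau> ` {1..k}" using assms by (rule Pairs_fst)
  have c: "card (\<sigma> ` {1..n}) = n" "card (\<tau> ` {1..k}) = k" using sI by (simp_all add: card_image)
  show "card (fst r) + card (\<sigma> ` {1..n} \<inter> \<tau> ` {1..k}) = n + k"
    using card_Un_Int[of "\<sigma> ` {1..n}" "\<tau> ` {1..k}"] c fr by simp
  show "finite (fst r)" using fr by simp
  show "fst r \<subseteq> {1..}" using fr sI(1,3) by (auto simp: PiE_def Pi_def)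
qed

lemma decomp:
  assumes g: "gfix X I n g" and h: "gfix X I k h"
  shows "conv (Bser X I n g) (Bser X I k h) r - Bser X I (n+k) (Gab X I n k g h (al0 k) (be0 n k)) r
   = (\<Sum>m\<in>{..<n+k}. \<Sum>ab\<in>JS n k m. (1 / fact m) * Bser X I m (Gab X I n k g h (fst ab) (snd ab)) r)"
proof -
  define P where "P = Pairs X I n k g h r"
  define NB where "NB m = {\<rho> \<in> Inj m. \<rho> ` {1..m} = fst r}" for m
  have inner: "(\<Sum>ab\<in>JS n k m. (1 / fact m) * Bser X I m (Gab X I n k g h (fst ab) (snd ab)) r)
      = (1 / fact m) * of_nat (card P * card (NB m))" for m
  proof -
    have "(\<Sum>ab\<in>JS n k m. (1 / fact m) * Bser X I m (Gab X I n k g h (fst ab) (snd ab)) r)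
        = (1 / fact m) * (\<Sum>ab\<in>JS n k m. Bser X I m (Gab X I n k g h (fst ab) (snd ab)) r)"
      by (simp add: sum_distrib_left)
    also have "(\<Sum>ab\<in>JS n k m. Bser X I m (Gab X I n k g h (fst ab) (snd ab)) r)
        = (\<Sum>ab\<in>JS n k m. of_nat (card {\<rho> \<in> Inj m. Phi n k (fst ab) (snd ab) \<rho> \<in> Pairs X I n k g h r}))"
    proof (rule sum.cong[OF refl])
      fix ab assume ab: "ab \<in> JS n k m"
      hence "(fst ab, snd ab) \<in> JS n k m" by simp
      thus "Bser X I m (Gab X I n k g h (fst ab) (snd ab)) r =
            of_nat (card {\<rho> \<in> Inj m. Phi n k (fst ab) (snd ab) \<rho> \<in> Pairs X I n k g h r})"
        by (rule Bser_Gab[OF _ g h])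
    qed
    also have "\<dots> = of_nat (card P * card (NB m))"
      unfolding of_nat_sum[symmetric] sum_patterns by (simp add: P_def NB_def)
    finally show ?thesis .
  qed
  have D0: "card (DPairs X I n k g h r) \<le> card P" 
    unfolding DPairs_def P_def by (rule card_mono[OF Pairs_finite]) auto
  show ?thesis
  proof (cases "P = {}")
    case True
    have "DPairs X I n k g h r = {}" using True by (simp add: DPairs_def P_def)
    moreover have "(\<Sum>m\<in>{..<n+k}. \<Sum>ab\<in>JS n k m. (1 / fact m) * Bser X I m (Gab X I n k g h (fst ab) (snd ab)) r) = 0"
    proof (rule sum.neutral, rule ballI)
      fix m show "(\<Sum>ab\<in>JS n k m. (1 / fact m) * Bser X I m (Gab X I n k g h (fst ab) (snd ab)) r) = 0"
        unfolding inner using True by simp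
    qed
    ultimately show ?thesis using True
      by (simp add: conv_Bser Bser_lead[OF g h] P_def[symmetric])
  next
    case False
    then obtain \<sigma>0 \<tau>0 where st0: "(\<sigma>0,\<tau>0) \<in> P" by auto
    note U = Pairs_card_union[OF st0[unfolded P_def]]
    define c where "c = card (fst r)"
    have cle: "c \<le> n + k" using U(1) by (simp add: c_def)
    have NBc: "card (NB m) = (if m = c then fact m else 0)" for m
    proof (cases "m = c")
      case True thus ?thesis using card_NB[OF U(2) _ U(3), of m] by (simp add: NB_def c_def)
    next
      case False
      have "NB m = {}"
      proof (rule ccontr)
        assume "NB m \<noteq> {}"
        then obtain \<rho> where r: "\<rho> \<in> Inj m" "\<rho> ` {1..m} = fst r" by (auto simp: NB_def)
        have "inj_on \<rho> {1..m}" using r(1) by (simp add: Inj_def)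
        hence "card (\<rho> ` {1..m}) = m" by (simp add: card_image)
        hence "card (fst r) = m" using r(2) by simp
        thus False using False by (simp add: c_def)
      qed
      thus ?thesis using False by simp
    qed
    have RHS: "(\<Sum>m\<in>{..<n+k}. \<Sum>ab\<in>JS n k m. (1 / fact m) * Bser X I m (Gab X I n k g h (fst ab) (snd ab)) r)
        = (if c < n + k then of_nat (card P) else 0)"
    proof -
      have "(\<Sum>m\<in>{..<n+k}. \<Sum>ab\<in>JS n k m. (1 / fact m) * Bser X I m (Gab X I n k g h (fst ab) (snd ab)) r)
          = (\<Sum>m\<in>{..<n+k}. if m = c then (of_nat (card P) :: complex) else 0)"
        by (rule sum.cong[OF refl]) (unfold inner NBc, simp)
      also have "\<dots> = (if c < n + k then of_nat (card P) else 0)" by simp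
      finally show ?thesis .
    qed
    have LHS: "conv (Bser X I n g) (Bser X I k h) r - Bser X I (n+k) (Gab X I n k g h (al0 k) (be0 n k)) r
        = of_nat (card P) - of_nat (card (DPairs X I n k g h r))"
      by (simp add: conv_Bser Bser_lead[OF g h] P_def)
    show ?thesis
    proof (cases "c < n + k")
      case True
      have "DPairs X I n k g h r = {}"
      proof (rule ccontr)
        assume "DPairs X I n k g h r \<noteq> {}"
        then obtain x where "x \<in> DPairs X I n k g h r" by blast
        then obtain \<sigma> \<tau> where st: "(\<sigma>,\<tau>) \<in> Pairs X I n k g h r" "\<sigma> ` {1..n} \<inter> \<tau> ` {1..k} = {}"
          by (cases x) (auto simp: DPairs_def)
        have "c = n + k" using Pairs_card_union(1)[OF st(1)] st(2) by (simp add: c_def)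
        thus False using True by simp
      qed
      thus ?thesis using LHS RHS True by simp
    next
      case False
      hence cnk: "c = n + k" using cle by simp
      have "DPairs X I n k g h r = P"
      proof (rule set_eqI, rule iffI)
        fix x assume "x \<in> DPairs X I n k g h r" thus "x \<in> P" by (simp add: DPairs_def P_def)
      next
        fix x assume x: "x \<in> P"
        obtain \<sigma> \<tau> where xe: "x = (\<sigma>,\<tau>)" by (cases x)
        have "(\<sigma>,\<tau>) \<in> Pairs X I n k g h r" using x by (simp add: xe P_def)
        note V = Pairs_card_union[OF this]
        have "card (\<sigma> ` {1..n} \<inter> \<tau> ` {1..k}) = 0" using V(1) cnk by (simp add: c_def)
        hence "\<sigma> ` {1..n} \<inter> \<tau> ` {1..k} = {}" by simp
        thus "x \<in> DPairs X I n k g h r" using x by (simp add: xe DPairs_def P_def)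
      qed
      thus ?thesis using LHS RHS False by simp
    qed
  qed
qed


section \<open>Linear spans\<close>

lemma ls_zero: "(\<lambda>r. 0) \<in> lin_span A"
  unfolding lin_span_def by (rule CollectI, rule exI[of _ "{}"]) auto

lemma ls_base: "a \<in> A \<Longrightarrow> a \<in> lin_span A"
  unfolding lin_span_def by (rule CollectI, rule exI[of _ "{a}"], rule exI[of _ "\<lambda>_. 1"]) auto

lemma ls_add:
  assumes "x \<in> lin_span A" "y \<in> lin_span A"
  shows "(\<lambda>r. x r + y r) \<in> lin_span A"
proof -
  obtain S c where S: "finite S" "S \<subseteq> A" "x = (\<lambda>r. \<Sum>s\<in>S. c s * s r)" using assms(1) by (auto simp: lin_span_def)
  obtain S' c' where S': "finite S'" "S' \<subseteq> A" "y = (\<lambda>r. \<Sum>s\<in>S'. c' s * s r)" using assms(2) by (auto simp: lin_span_def)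
  define d where "d s = (if s \<in> S then c s else 0) + (if s \<in> S' then c' s else 0)" for s
  have "(\<lambda>r. x r + y r) = (\<lambda>r. \<Sum>s\<in>S \<union> S'. d s * s r)"
  proof
    fix r
    have "(\<Sum>s\<in>S \<union> S'. d s * s r) = (\<Sum>s\<in>S \<union> S'. (if s \<in> S then c s * s r else 0) + (if s \<in> S' then c' s * s r else 0))"
      by (rule sum.cong) (auto simp: d_def algebra_simps)
    also have "\<dots> = (\<Sum>s\<in>S \<union> S'. (if s \<in> S then c s * s r else 0)) + (\<Sum>s\<in>S \<union> S'. (if s \<in> S' then c' s * s r else 0))"
      by (rule sum.distrib)
    also have "\<dots> = (\<Sum>s\<in>S. c s * s r) + (\<Sum>s\<in>S'. c' s * s r)"
      using S(1) S'(1) by (simp add: sum.inter_restrict[symmetric] Int_absorb1 Int_absorb2)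
    finally show "x r + y r = (\<Sum>s\<in>S \<union> S'. d s * s r)" by (simp add: S(3) S'(3))
  qed
  thus ?thesis using S S' unfolding lin_span_def
    by (intro CollectI exI[of _ "S \<union> S'"] exI[of _ d]) simp
qed

lemma ls_smult:
  assumes "x \<in> lin_span A" shows "(\<lambda>r. a * x r) \<in> lin_span A"
proof -
  obtain S c where S: "finite S" "S \<subseteq> A" "x = (\<lambda>r. \<Sum>s\<in>S. c s * s r)" using assms(1) by (auto simp: lin_span_def)
  have "(\<lambda>r. a * x r) = (\<lambda>r. \<Sum>s\<in>S. (a * c s) * s r)" by (simp add: S(3) sum_distrib_left mult.assoc)
  thus ?thesis using S unfolding lin_span_def
    by (intro CollectI exI[of _ S] exI[of _ "\<lambda>s. a * c s"]) simp
qed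

lemma ls_sum:
  assumes "finite T" "\<And>t. t \<in> T \<Longrightarrow> f t \<in> lin_span A"
  shows "(\<lambda>r. \<Sum>t\<in>T. f t r) \<in> lin_span A"
  using assms
proof (induction T rule: finite_induct)
  case empty thus ?case by (simp add: ls_zero)
next
  case (insert t T)
  have "(\<lambda>r. f t r + (\<Sum>t\<in>T. f t r)) \<in> lin_span A"
    using insert by (intro ls_add) auto
  thus ?case using insert by simp
qed

lemma ls_diff:
  assumes "x \<in> lin_span A" "y \<in> lin_span A" shows "(\<lambda>r. x r - y r) \<in> lin_span A"
proof -
  have "(\<lambda>r. x r + (-1) * y r) \<in> lin_span A" using assms by (intro ls_add ls_smult)
  thus ?thesis by simp
qed

lemma ls_mono: "A \<subseteq> B \<Longrightarrow> lin_span A \<subseteq> lin_span B"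
  unfolding lin_span_def by blast

lemma Bfilt_mono: "m \<le> m' \<Longrightarrow> Bfilt X I G m \<subseteq> Bfilt X I G m'"
  unfolding Bfilt_def by (rule ls_mono) (blast intro: order_trans)

lemma Bser_in_Bfilt: "int j \<le> m \<Longrightarrow> g \<in> Gn X I G j \<Longrightarrow> Bser X I j g \<in> Bfilt X I G m"
  unfolding Bfilt_def by (rule ls_base) auto


lemma B_sum: "finite T \<Longrightarrow> (\<And>t. t \<in> T \<Longrightarrow> f t \<in> Bfilt X I G m) \<Longrightarrow> (\<lambda>r. \<Sum>t\<in>T. f t r) \<in> Bfilt X I G m"
  unfolding Bfilt_def by (rule ls_sum)
lemma B_smult: "x \<in> Bfilt X I G m \<Longrightarrow> (\<lambda>r. a * x r) \<in> Bfilt X I G m"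
  unfolding Bfilt_def by (rule ls_smult)
lemma B_diff: "x \<in> Bfilt X I G m \<Longrightarrow> y \<in> Bfilt X I G m \<Longrightarrow> (\<lambda>r. x r - y r) \<in> Bfilt X I G m"
  unfolding Bfilt_def by (rule ls_diff)
lemma B_add: "x \<in> Bfilt X I G m \<Longrightarrow> y \<in> Bfilt X I G m \<Longrightarrow> (\<lambda>r. x r + y r) \<in> Bfilt X I G m"
  unfolding Bfilt_def by (rule ls_add)

lemma liftN_id: "liftN (\<lambda>j. j) v = v" by (cases v rule: pt_cases) auto

lemma conj_al0:
  assumes h: "gfix X I k h" shows "conj_loc X I k h (al0 k) = ({1..k}, h)"
proof -
  have "conj_loc X I k h (al0 k) = conj_loc X I k h (\<lambda>j. j)"
    by (rule conjloc_cong[OF _ h]) (simp add: al0_def)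
  also have "\<dots> = ({1..k}, h)"
  proof (rule prod_eqI)
    show "fst (conj_loc X I k h (\<lambda>j. j)) = fst ({1..k}, h)" by simp
    show "snd (conj_loc X I k h (\<lambda>j. j)) = snd ({1..k}, h)"
    proof
      fix v show "snd (conj_loc X I k h (\<lambda>j. j)) v = snd ({1..k}, h) v"
      proof (cases "v \<in> OmegaF X I ((\<lambda>j. j) ` {1..k})")
        case True
        have "liftN (\<lambda>j. j) (liftN (inv_into {1..k} (\<lambda>j. j)) v) = v" using True by (rule lift_cancel2)
        hence "liftN (inv_into {1..k} (\<lambda>j. j)) v = v" by (simp add: liftN_id)
        thus ?thesis using True by (simp add: conj_in liftN_id)
      next
        case False
        hence "h v = v" using gfixD1[OF h, of v] by simp
        thus ?thesis using False by (simp add: conj_out)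
      qed
    qed
  qed
  finally show ?thesis .
qed

lemma lead_diff:
  assumes adm: "admissible_group X I G" and gG: "g \<in> Gn X I G n" and hG: "h \<in> Gn X I G k"
  shows "(\<lambda>r. conv (Bser X I n g) (Bser X I k h) r - Bser X I (n+k) (Gab X I n k g h (al0 k) (be0 n k)) r)
           \<in> Bfilt X I G (int (n+k) - 1)"
proof -
  have g: "gfix X I n g" and h: "gfix X I k h" using Gn_gfix adm gG hG by blast+
  show "(\<lambda>r. conv (Bser X I n g) (Bser X I k h) r - Bser X I (n+k) (Gab X I n k g h (al0 k) (be0 n k)) r)
           \<in> Bfilt X I G (int (n+k) - 1)"
  proof -
    have "(\<lambda>r. \<Sum>m\<in>{..<n+k}. \<Sum>ab\<in>JS n k m. (1 / fact m) * Bser X I m (Gab X I n k g h (fst ab) (snd ab)) r)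
           \<in> Bfilt X I G (int (n+k) - 1)"
    proof (rule B_sum)
      show "finite {..<n+k}" by simp
    next
      fix m assume m: "m \<in> {..<n+k}"
      show "(\<lambda>r. \<Sum>ab\<in>JS n k m. (1 / fact m) * Bser X I m (Gab X I n k g h (fst ab) (snd ab)) r)
           \<in> Bfilt X I G (int (n+k) - 1)"
      proof (rule B_sum[OF JS_finite])
        fix ab assume ab: "ab \<in> JS n k m"
        hence ab': "(fst ab, snd ab) \<in> JS n k m" by simp
        have "Bser X I m (Gab X I n k g h (fst ab) (snd ab)) \<in> Bfilt X I G (int (n+k) - 1)"
          using m by (intro Bser_in_Bfilt Gab_Gn[OF adm ab' gG hG]) auto
        thus "(\<lambda>r. (1 / fact m) * Bser X I m (Gab X I n k g h (fst ab) (snd ab)) r)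
           \<in> Bfilt X I G (int (n+k) - 1)"
          by (rule B_smult)
      qed
    qed
    moreover have "(\<lambda>r. conv (Bser X I n g) (Bser X I k h) r - Bser X I (n+k) (Gab X I n k g h (al0 k) (be0 n k)) r)
       = (\<lambda>r. \<Sum>m\<in>{..<n+k}. \<Sum>ab\<in>JS n k m. (1 / fact m) * Bser X I m (Gab X I n k g h (fst ab) (snd ab)) r)"
      using decomp[OF g h] by (rule ext)
    ultimately show ?thesis by simp
  qed
qed

lemma partA:
  assumes adm: "admissible_group X I G" and gG: "g \<in> Gn X I G n" and hG: "h \<in> Gn X I G k"
  shows "let nu = lb_comp (conj_loc X I n g (\<lambda>j. j + k)) ({1..k}, h) in
         fst nu = {1..n+k} \<and> snd nu \<in> Gn X I G (n+k) \<and>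
         (\<lambda>r. conv (Bser X I n g) (Bser X I k h) r - Bser X I (n+k) (snd nu) r)
           \<in> Bfilt X I G (int (n+k) - 1)"
proof -
  have g: "gfix X I n g" and h: "gfix X I k h" using Gn_gfix adm gG hG by blast+
  have c1: "conj_loc X I n g (\<lambda>j. j + k) = conj_loc X I n g (be0 n k)"
    by (rule conjloc_cong[OF _ g]) (simp add: be0_def)
  have nu: "lb_comp (conj_loc X I n g (\<lambda>j. j + k)) ({1..k}, h) = ({1..n+k}, Gab X I n k g h (al0 k) (be0 n k))"
    using JS_D(5)[OF JS0[of k n]] unfolding c1 conj_al0[OF h, symmetric]
    by (simp add: lb_comp_def Gab_def Un_commute)
  have mem: "(\<lambda>r. conv (Bser X I n g) (Bser X I k h) r - Bser X I (n+k) (Gab X I n k g h (al0 k) (be0 n k)) r)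
           \<in> Bfilt X I G (int (n+k) - 1)"
  proof -
    have "(\<lambda>r. \<Sum>m\<in>{..<n+k}. \<Sum>ab\<in>JS n k m. (1 / fact m) * Bser X I m (Gab X I n k g h (fst ab) (snd ab)) r)
           \<in> Bfilt X I G (int (n+k) - 1)"
    proof (rule B_sum)
      show "finite {..<n+k}" by simp
    next
      fix m assume m: "m \<in> {..<n+k}"
      show "(\<lambda>r. \<Sum>ab\<in>JS n k m. (1 / fact m) * Bser X I m (Gab X I n k g h (fst ab) (snd ab)) r)
           \<in> Bfilt X I G (int (n+k) - 1)"
      proof (rule B_sum[OF JS_finite])
        fix ab assume ab: "ab \<in> JS n k m"
        hence ab': "(fst ab, snd ab) \<in> JS n k m" by simp
        have "Bser X I m (Gab X I n k g h (fst ab) (snd ab)) \<in> Bfilt X I G (int (n+k) - 1)"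
          using m by (intro Bser_in_Bfilt Gab_Gn[OF adm ab' gG hG]) auto
        thus "(\<lambda>r. (1 / fact m) * Bser X I m (Gab X I n k g h (fst ab) (snd ab)) r)
           \<in> Bfilt X I G (int (n+k) - 1)"
          by (rule B_smult)
      qed
    qed
    moreover have "(\<lambda>r. conv (Bser X I n g) (Bser X I k h) r - Bser X I (n+k) (Gab X I n k g h (al0 k) (be0 n k)) r)
       = (\<lambda>r. \<Sum>m\<in>{..<n+k}. \<Sum>ab\<in>JS n k m. (1 / fact m) * Bser X I m (Gab X I n k g h (fst ab) (snd ab)) r)"
      using decomp[OF g h] by (rule ext)
    ultimately show ?thesis by simp
  qed
  show ?thesis unfolding Let_def nu using mem Gab_Gn[OF adm JS0 gG hG] by simp
qed


section \<open>Bilinearity of convolution\<close>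

definition good :: "('x,'i) series \<Rightarrow> bool" where
  "good a \<longleftrightarrow> (\<forall>p. a p \<noteq> 0 \<longrightarrow> finite (fst p)) \<and> (\<forall>F. finite F \<longrightarrow> finite {p. a p \<noteq> 0 \<and> fst p \<subseteq> F})"

lemma goodD1: "good a \<Longrightarrow> a p \<noteq> 0 \<Longrightarrow> finite (fst p)" unfolding good_def by blast
lemma goodD2: "good a \<Longrightarrow> finite F \<Longrightarrow> finite {p. a p \<noteq> 0 \<and> fst p \<subseteq> F}" by (simp add: good_def)

lemma good_Bser: "good (Bser X I n g)"
proof -
  have nz: "Bser X I n g p \<noteq> 0 \<Longrightarrow> \<exists>\<sigma>\<in>Inj n. conj_loc X I n g \<sigma> = p" for p
    by (auto simp: Bser_card card_gt_0_iff)
  have "finite (fst p)" if "Bser X I n g p \<noteq> 0" for p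
    using nz[OF that] by auto
  moreover have "finite {p. Bser X I n g p \<noteq> 0 \<and> fst p \<subseteq> F}" if F: "finite F" for F
  proof -
    have "{p. Bser X I n g p \<noteq> 0 \<and> fst p \<subseteq> F} \<subseteq> conj_loc X I n g ` ({1..n} \<rightarrow>\<^sub>E F)"
    proof
      fix p assume p: "p \<in> {p. Bser X I n g p \<noteq> 0 \<and> fst p \<subseteq> F}"
      then obtain \<sigma> where s: "\<sigma> \<in> Inj n" "conj_loc X I n g \<sigma> = p" using nz by blast
      have "\<sigma> ` {1..n} \<subseteq> F" using p s by auto
      hence "\<sigma> \<in> {1..n} \<rightarrow>\<^sub>E F" using s(1) by (auto simp: Inj_def PiE_def)
      thus "p \<in> conj_loc X I n g ` ({1..n} \<rightarrow>\<^sub>E F)" using s(2) by blast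
    qed
    moreover have "finite (conj_loc X I n g ` ({1..n} \<rightarrow>\<^sub>E F))" using F by (simp add: finite_PiE)
    ultimately show ?thesis by (rule finite_subset)
  qed
  ultimately show ?thesis by (simp add: good_def)
qed

lemma sum_nz: "(\<Sum>s\<in>S. f s) \<noteq> (0::'a::comm_monoid_add) \<Longrightarrow> \<exists>s\<in>S. f s \<noteq> 0"
  by (metis sum.neutral)

lemma good_comb:
  assumes S: "finite S" "\<And>s. s \<in> S \<Longrightarrow> good s"
  shows "good (\<lambda>r. \<Sum>s\<in>S. c s * s r)"
proof -
  have nz: "\<exists>s\<in>S. s p \<noteq> 0" if "(\<Sum>s\<in>S. c s * s p) \<noteq> 0" for p
    using sum_nz[OF that] by auto
  have "finite (fst p)" if "(\<Sum>s\<in>S. c s * s p) \<noteq> 0" for p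
    using nz[OF that] S(2) goodD1 by blast
  moreover have "finite {p. (\<Sum>s\<in>S. c s * s p) \<noteq> 0 \<and> fst p \<subseteq> F}" if F: "finite F" for F
  proof (rule finite_subset)
    show "{p. (\<Sum>s\<in>S. c s * s p) \<noteq> 0 \<and> fst p \<subseteq> F} \<subseteq> (\<Union>s\<in>S. {p. s p \<noteq> 0 \<and> fst p \<subseteq> F})"
      using nz by blast
    show "finite (\<Union>s\<in>S. {p. s p \<noteq> 0 \<and> fst p \<subseteq> F})" using S F goodD2 by blast
  qed
  ultimately show ?thesis by (simp add: good_def)
qed

lemma conv_expand:
  assumes A: "finite A" "{p. a p \<noteq> 0 \<and> fst p \<subseteq> fst r} \<subseteq> A"
    and B: "finite B" "{q. b q \<noteq> 0 \<and> fst q \<subseteq> fst r} \<subseteq> B"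
  shows "conv a b r = (\<Sum>z\<in>{z \<in> A \<times> B. lb_comp (fst z) (snd z) = r}. a (fst z) * b (snd z))"
proof -
  have "conv a b r = (\<Sum>z\<in>{(p,q). a p \<noteq> 0 \<and> b q \<noteq> 0 \<and> lb_comp p q = r}. a (fst z) * b (snd z))"
    unfolding conv_def by (simp add: case_prod_beta')
  also have "\<dots> = (\<Sum>z\<in>{z \<in> A \<times> B. lb_comp (fst z) (snd z) = r}. a (fst z) * b (snd z))"
  proof (rule sum.mono_neutral_left)
    show "finite {z \<in> A \<times> B. lb_comp (fst z) (snd z) = r}" using A B by simp
    show "{(p,q). a p \<noteq> 0 \<and> b q \<noteq> 0 \<and> lb_comp p q = r} \<subseteq> {z \<in> A \<times> B. lb_comp (fst z) (snd z) = r}"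
    proof
      fix z assume z: "z \<in> {(p,q). a p \<noteq> 0 \<and> b q \<noteq> 0 \<and> lb_comp p q = r}"
      obtain p q where ze: "z = (p,q)" by (cases z)
      have "fst p \<subseteq> fst r" "fst q \<subseteq> fst r" using z by (auto simp: ze lb_comp_def)
      thus "z \<in> {z \<in> A \<times> B. lb_comp (fst z) (snd z) = r}" using z A(2) B(2) by (auto simp: ze)
    qed
    show "\<forall>i\<in>{z \<in> A \<times> B. lb_comp (fst z) (snd z) = r} - {(p,q). a p \<noteq> 0 \<and> b q \<noteq> 0 \<and> lb_comp p q = r}.
            a (fst i) * b (snd i) = 0" by auto
  qed
  finally show ?thesis .
qed

lemma conv_inf:
  assumes "good a" "good b" "infinite (fst r)" shows "conv a b r = 0"
proof -
  have E: "{(p,q). a p \<noteq> 0 \<and> b q \<noteq> 0 \<and> lb_comp p q = r} = {}"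
  proof (rule ccontr)
    assume "{(p,q). a p \<noteq> 0 \<and> b q \<noteq> 0 \<and> lb_comp p q = r} \<noteq> {}"
    then obtain p q where pq: "a p \<noteq> 0" "b q \<noteq> 0" "lb_comp p q = r" by blast
    have "finite (fst p)" "finite (fst q)" using goodD1 assms(1,2) pq(1,2) by blast+
    moreover have "fst r = fst p \<union> fst q" using pq(3) by (auto simp: lb_comp_def)
    ultimately show False using assms(3) by simp
  qed
  show ?thesis by (simp only: conv_def E sum.empty)
qed


lemma conv_left:
  assumes S: "finite S" "\<And>s. s \<in> S \<Longrightarrow> good s" and b: "good b"
  shows "conv (\<lambda>r. \<Sum>s\<in>S. c s * s r) b r = (\<Sum>s\<in>S. c s * conv s b r)"
proof (cases "finite (fst r)")
  case False
  have "conv (\<lambda>r. \<Sum>s\<in>S. c s * s r) b r = 0" by (rule conv_inf[OF good_comb[OF S] b False])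
  moreover have "conv s b r = 0" if "s \<in> S" for s by (rule conv_inf[OF S(2)[OF that] b False])
  ultimately show ?thesis by simp
next
  case True
  define F where "F = fst r"
  define A where "A = (\<Union>s\<in>S. {p. s p \<noteq> 0 \<and> fst p \<subseteq> F})"
  define B where "B = {q. b q \<noteq> 0 \<and> fst q \<subseteq> F}"
  define D where "D = {z \<in> A \<times> B. lb_comp (fst z) (snd z) = r}"
  have fA: "finite A" unfolding A_def using S True goodD2 by (auto simp: F_def)
  have fB: "finite B" unfolding B_def using b True goodD2 by (auto simp: F_def)
  have sA: "{p. (\<Sum>s\<in>S. c s * s p) \<noteq> 0 \<and> fst p \<subseteq> fst r} \<subseteq> A"
    unfolding A_def F_def using sum_nz by fastforce
  have sA': "{p. s p \<noteq> 0 \<and> fst p \<subseteq> fst r} \<subseteq> A" if "s \<in> S" for s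
    unfolding A_def F_def using that by blast
  have sB: "{q. b q \<noteq> 0 \<and> fst q \<subseteq> fst r} \<subseteq> B" by (simp add: B_def F_def)
  have "conv (\<lambda>r. \<Sum>s\<in>S. c s * s r) b r = (\<Sum>z\<in>D. (\<Sum>s\<in>S. c s * s (fst z)) * b (snd z))"
    unfolding D_def by (rule conv_expand[OF fA sA fB sB])
  also have "\<dots> = (\<Sum>z\<in>D. \<Sum>s\<in>S. c s * (s (fst z) * b (snd z)))"
    by (simp add: sum_distrib_right mult.assoc)
  also have "\<dots> = (\<Sum>s\<in>S. \<Sum>z\<in>D. c s * (s (fst z) * b (snd z)))" by (rule sum.swap)
  also have "\<dots> = (\<Sum>s\<in>S. c s * (\<Sum>z\<in>D. s (fst z) * b (snd z)))" by (simp add: sum_distrib_left)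
  also have "\<dots> = (\<Sum>s\<in>S. c s * conv s b r)"
  proof (rule sum.cong[OF refl])
    fix s assume s: "s \<in> S"
    have "conv s b r = (\<Sum>z\<in>D. s (fst z) * b (snd z))"
      unfolding D_def by (rule conv_expand[OF fA sA'[OF s] fB sB])
    thus "c s * (\<Sum>z\<in>D. s (fst z) * b (snd z)) = c s * conv s b r" by simp
  qed
  finally show ?thesis .
qed

lemma conv_right:
  assumes T: "finite T" "\<And>t. t \<in> T \<Longrightarrow> good t" and a: "good a"
  shows "conv a (\<lambda>r. \<Sum>t\<in>T. d t * t r) r = (\<Sum>t\<in>T. d t * conv a t r)"
proof (cases "finite (fst r)")
  case False
  have "conv a (\<lambda>r. \<Sum>t\<in>T. d t * t r) r = 0" by (rule conv_inf[OF a good_comb[OF T] False])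
  moreover have "conv a t r = 0" if "t \<in> T" for t by (rule conv_inf[OF a T(2)[OF that] False])
  ultimately show ?thesis by simp
next
  case True
  define F where "F = fst r"
  define B where "B = (\<Union>t\<in>T. {p. t p \<noteq> 0 \<and> fst p \<subseteq> F})"
  define A where "A = {q. a q \<noteq> 0 \<and> fst q \<subseteq> F}"
  define D where "D = {z \<in> A \<times> B. lb_comp (fst z) (snd z) = r}"
  have fB: "finite B" unfolding B_def using T True goodD2 by (auto simp: F_def)
  have fA: "finite A" unfolding A_def using a True goodD2 by (auto simp: F_def)
  have sB: "{p. (\<Sum>t\<in>T. d t * t p) \<noteq> 0 \<and> fst p \<subseteq> fst r} \<subseteq> B"
    unfolding B_def F_def using sum_nz by fastforce
  have sB': "{p. t p \<noteq> 0 \<and> fst p \<subseteq> fst r} \<subseteq> B" if "t \<in> T" for t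
    unfolding B_def F_def using that by blast
  have sA: "{q. a q \<noteq> 0 \<and> fst q \<subseteq> fst r} \<subseteq> A" by (simp add: A_def F_def)
  have "conv a (\<lambda>r. \<Sum>t\<in>T. d t * t r) r = (\<Sum>z\<in>D. a (fst z) * (\<Sum>t\<in>T. d t * t (snd z)))"
    unfolding D_def by (rule conv_expand[OF fA sA fB sB])
  also have "\<dots> = (\<Sum>z\<in>D. \<Sum>t\<in>T. d t * (a (fst z) * t (snd z)))"
    by (simp add: sum_distrib_left mult.left_commute)
  also have "\<dots> = (\<Sum>t\<in>T. \<Sum>z\<in>D. d t * (a (fst z) * t (snd z)))" by (rule sum.swap)
  also have "\<dots> = (\<Sum>t\<in>T. d t * (\<Sum>z\<in>D. a (fst z) * t (snd z)))" by (simp add: sum_distrib_left)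
  also have "\<dots> = (\<Sum>t\<in>T. d t * conv a t r)"
  proof (rule sum.cong[OF refl])
    fix t assume t: "t \<in> T"
    have "conv a t r = (\<Sum>z\<in>D. a (fst z) * t (snd z))"
      unfolding D_def by (rule conv_expand[OF fA sA fB sB'[OF t]])
    thus "d t * (\<Sum>z\<in>D. a (fst z) * t (snd z)) = d t * conv a t r" by simp
  qed
  finally show ?thesis .
qed


lemma OmegaF_disj: "A \<inter> B = {} \<Longrightarrow> v \<in> OmegaF {} I A \<Longrightarrow> v \<in> OmegaF {} I B \<Longrightarrow> False"
  by (cases v rule: pt_cases) auto

lemma conj_commute:
  assumes g: "gfix {} I n g" and h: "gfix {} I k h" and dj: "\<sigma> ` {1..n} \<inter> \<tau> ` {1..k} = {}"
  shows "lb_comp (conj_loc {} I n g \<sigma>) (conj_loc {} I k h \<tau>) = lb_comp (conj_loc {} I k h \<tau>) (conj_loc {} I n g \<sigma>)"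
proof -
  define P where "P = snd (conj_loc {} I n g \<sigma>)"
  define Q where "Q = snd (conj_loc {} I k h \<tau>)"
  have "P (Q v) = Q (P v)" for v
  proof (cases "v \<in> OmegaF {} I (\<sigma> ` {1..n})")
    case True
    have "v \<notin> OmegaF {} I (\<tau> ` {1..k})" using OmegaF_disj[OF dj True] by blast
    hence "Q v = v" by (simp add: Q_def conj_out)
    moreover have "P v \<in> OmegaF {} I (\<sigma> ` {1..n})" unfolding P_def by (rule conj_maps[OF g True])
    hence "P v \<notin> OmegaF {} I (\<tau> ` {1..k})" using OmegaF_disj[OF dj] by blast
    hence "Q (P v) = P v" by (simp add: Q_def conj_out)
    ultimately show ?thesis by simp
  next
    case False
    hence Pv: "P v = v" by (simp add: P_def conj_out)
    show ?thesis
    proof (cases "v \<in> OmegaF {} I (\<tau> ` {1..k})")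
      case True
      have "Q v \<in> OmegaF {} I (\<tau> ` {1..k})" unfolding Q_def by (rule conj_maps[OF h True])
      hence "Q v \<notin> OmegaF {} I (\<sigma> ` {1..n})" using OmegaF_disj[OF dj] by blast
      hence "P (Q v) = Q v" by (simp add: P_def conj_out)
      thus ?thesis using Pv by simp
    next
      case False
      hence "Q v = v" by (simp add: Q_def conj_out)
      thus ?thesis using Pv by simp
    qed
  qed
  hence "P \<circ> Q = Q \<circ> P" by auto
  thus ?thesis by (simp add: lb_comp_def P_def Q_def Un_commute)
qed

lemma Bser_swap:
  assumes g: "gfix {} I n g" and h: "gfix {} I k h"
  shows "Bser {} I (n+k) (Gab {} I n k g h (al0 k) (be0 n k)) = Bser {} I (k+n) (Gab {} I k n h g (al0 n) (be0 k n))"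
proof
  fix r
  have "prod.swap ` DPairs {} I n k g h r = DPairs {} I k n h g r"
  proof (rule set_eqI)
    fix z :: "(nat \<Rightarrow> nat) \<times> (nat \<Rightarrow> nat)"
    obtain \<tau> \<sigma> where ze: "z = (\<tau>,\<sigma>)" by (cases z)
    have L: "(\<sigma>,\<tau>) \<in> DPairs {} I n k g h r \<longleftrightarrow> \<sigma> \<in> Inj n \<and> \<tau> \<in> Inj k \<and>
       lb_comp (conj_loc {} I n g \<sigma>) (conj_loc {} I k h \<tau>) = r \<and> \<sigma> ` {1..n} \<inter> \<tau> ` {1..k} = {}"
      by (simp add: DPairs_def Pairs_def)
    have R: "(\<tau>,\<sigma>) \<in> DPairs {} I k n h g r \<longleftrightarrow> \<tau> \<in> Inj k \<and> \<sigma> \<in> Inj n \<and>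
       lb_comp (conj_loc {} I k h \<tau>) (conj_loc {} I n g \<sigma>) = r \<and> \<tau> ` {1..k} \<inter> \<sigma> ` {1..n} = {}"
      by (simp add: DPairs_def Pairs_def)
    have "(\<sigma>,\<tau>) \<in> DPairs {} I n k g h r \<longleftrightarrow> (\<tau>,\<sigma>) \<in> DPairs {} I k n h g r"
    proof (cases "\<sigma> ` {1..n} \<inter> \<tau> ` {1..k} = {}")
      case True
      have E: "lb_comp (conj_loc {} I n g \<sigma>) (conj_loc {} I k h \<tau>) = lb_comp (conj_loc {} I k h \<tau>) (conj_loc {} I n g \<sigma>)"
        by (rule conj_commute[OF g h True])
      have T2: "\<tau> ` {1..k} \<inter> \<sigma> ` {1..n} = {}" using True by blast
      show ?thesis unfolding L R E using True T2 by blast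
    next
      case False
      hence "\<tau> ` {1..k} \<inter> \<sigma> ` {1..n} \<noteq> {}" by blast
      thus ?thesis unfolding L R using False by blast
    qed
    moreover have "z \<in> prod.swap ` DPairs {} I n k g h r \<longleftrightarrow> (\<sigma>,\<tau>) \<in> DPairs {} I n k g h r"
    proof
      assume "z \<in> prod.swap ` DPairs {} I n k g h r"
      then obtain x where x: "x \<in> DPairs {} I n k g h r" "z = prod.swap x" by blast
      have "x = prod.swap z" using x(2) by simp
      thus "(\<sigma>,\<tau>) \<in> DPairs {} I n k g h r" using x(1) by (simp add: ze)
    next
      assume "(\<sigma>,\<tau>) \<in> DPairs {} I n k g h r"
      moreover have "z = prod.swap (\<sigma>,\<tau>)" by (simp add: ze)
      ultimately show "z \<in> prod.swap ` DPairs {} I n k g h r" by blast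
    qed
    ultimately show "z \<in> prod.swap ` DPairs {} I n k g h r \<longleftrightarrow> z \<in> DPairs {} I k n h g r"
      by (simp add: ze)
  qed
  hence "card (DPairs {} I k n h g r) = card (DPairs {} I n k g h r)"
    using card_image[OF inj_swap[of "DPairs {} I n k g h r"]] by simp
  thus "Bser {} I (n+k) (Gab {} I n k g h (al0 k) (be0 n k)) r = Bser {} I (k+n) (Gab {} I k n h g (al0 n) (be0 k n)) r"
    by (simp add: Bser_lead[OF g h] Bser_lead[OF h g])
qed


lemma conv_filt:
  assumes adm: "admissible_group X I G" and gG: "g \<in> Gn X I G n" and hG: "h \<in> Gn X I G k"
  shows "(\<lambda>r. conv (Bser X I n g) (Bser X I k h) r) \<in> Bfilt X I G (int (n+k))"
proof -
  have D: "(\<lambda>r. conv (Bser X I n g) (Bser X I k h) r - Bser X I (n+k) (Gab X I n k g h (al0 k) (be0 n k)) r)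
           \<in> Bfilt X I G (int (n+k))"
    using lead_diff[OF adm gG hG] Bfilt_mono[of "int (n+k) - 1" "int (n+k)" X I G] by auto
  have B: "Bser X I (n+k) (Gab X I n k g h (al0 k) (be0 n k)) \<in> Bfilt X I G (int (n+k))"
    by (rule Bser_in_Bfilt[OF _ Gab_Gn[OF adm JS0 gG hG]]) simp
  have "(\<lambda>r. (conv (Bser X I n g) (Bser X I k h) r - Bser X I (n+k) (Gab X I n k g h (al0 k) (be0 n k)) r)
          + Bser X I (n+k) (Gab X I n k g h (al0 k) (be0 n k)) r) \<in> Bfilt X I G (int (n+k))"
    using B_add[OF D B] .
  thus ?thesis by simp
qed

lemma pair_comm:
  assumes adm: "admissible_group X I G" and X0: "X = {}" and gG: "g \<in> Gn X I G j" and hG: "h \<in> Gn X I G j'"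
    and jk: "j \<le> k" and jl: "j' \<le> l"
  shows "(\<lambda>r. conv (Bser X I j g) (Bser X I j' h) r - conv (Bser X I j' h) (Bser X I j g) r)
         \<in> Bfilt X I G (int (k+l) - 1)"
proof (cases "j + j' < k + l")
  case True
  have "Bfilt X I G (int (j+j')) \<subseteq> Bfilt X I G (int (k+l) - 1)"
    "Bfilt X I G (int (j'+j)) \<subseteq> Bfilt X I G (int (k+l) - 1)" using True by (auto intro!: Bfilt_mono)
  hence "(\<lambda>r. conv (Bser X I j g) (Bser X I j' h) r) \<in> Bfilt X I G (int (k+l) - 1)"
    "(\<lambda>r. conv (Bser X I j' h) (Bser X I j g) r) \<in> Bfilt X I G (int (k+l) - 1)"
    using conv_filt[OF adm gG hG] conv_filt[OF adm hG gG] by auto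
  thus ?thesis by (rule B_diff)
next
  case False
  hence e: "j + j' = k + l" "j' + j = k + l" using jk jl by auto
  have g: "gfix X I j g" and h: "gfix X I j' h" using Gn_gfix adm gG hG by blast+
  have ie1: "int (j+j') - 1 = int (k+l) - 1" and ie2: "int (j'+j) - 1 = int (k+l) - 1" using e by simp_all
  have sw: "Bser X I (j+j') (Gab X I j j' g h (al0 j') (be0 j j')) = Bser X I (j'+j) (Gab X I j' j h g (al0 j) (be0 j' j))"
    using Bser_swap[of I j g j' h, folded X0] g h by blast
  have D1: "(\<lambda>r. conv (Bser X I j g) (Bser X I j' h) r - Bser X I (j+j') (Gab X I j j' g h (al0 j') (be0 j j')) r)
           \<in> Bfilt X I G (int (k+l) - 1)" using lead_diff[OF adm gG hG, unfolded ie1] .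
  have D2: "(\<lambda>r. conv (Bser X I j' h) (Bser X I j g) r - Bser X I (j+j') (Gab X I j j' g h (al0 j') (be0 j j')) r)
           \<in> Bfilt X I G (int (k+l) - 1)" using lead_diff[OF adm hG gG, unfolded ie2 sw[symmetric]] .
  have "(\<lambda>r. (conv (Bser X I j g) (Bser X I j' h) r - Bser X I (j+j') (Gab X I j j' g h (al0 j') (be0 j j')) r)
      - (conv (Bser X I j' h) (Bser X I j g) r - Bser X I (j+j') (Gab X I j j' g h (al0 j') (be0 j j')) r))
      \<in> Bfilt X I G (int (k+l) - 1)" using B_diff[OF D1 D2] .
  thus ?thesis by simp
qed


lemma partB:
  assumes adm: "admissible_group X I G" and X0: "X = {}"
    and x: "x \<in> Bfilt X I G (int k)" and y: "y \<in> Bfilt X I G (int l)"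
  shows "(\<lambda>r. conv x y r - conv y x r) \<in> Bfilt X I G (int (k+l) - 1)"
proof -
  obtain S c where S: "finite S" "S \<subseteq> {Bser X I j g | j g. int j \<le> int k \<and> g \<in> Gn X I G j}"
    and xe: "x = (\<lambda>r. \<Sum>s\<in>S. c s * s r)" using x by (auto simp: Bfilt_def lin_span_def)
  obtain T d where T: "finite T" "T \<subseteq> {Bser X I j g | j g. int j \<le> int l \<and> g \<in> Gn X I G j}"
    and ye: "y = (\<lambda>r. \<Sum>t\<in>T. d t * t r)" using y by (auto simp: Bfilt_def lin_span_def)
  have gS: "good s" if "s \<in> S" for s using S(2) that good_Bser by blast
  have gT: "good t" if "t \<in> T" for t using T(2) that good_Bser by blast
  have gx: "good x" unfolding xe by (rule good_comb[OF S(1) gS])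
  have gy: "good y" unfolding ye by (rule good_comb[OF T(1) gT])
  have eq: "conv x y r - conv y x r = (\<Sum>s\<in>S. \<Sum>t\<in>T. (c s * d t) * (conv s t r - conv t s r))" for r
  proof -
    have "conv x y r = (\<Sum>s\<in>S. c s * conv s y r)" unfolding xe by (rule conv_left[OF S(1) gS gy])
    also have "\<dots> = (\<Sum>s\<in>S. c s * (\<Sum>t\<in>T. d t * conv s t r))"
      by (rule sum.cong[OF refl]) (simp only: ye conv_right[OF T(1) gT gS])
    also have "\<dots> = (\<Sum>s\<in>S. \<Sum>t\<in>T. (c s * d t) * conv s t r)"
      by (simp add: sum_distrib_left mult.assoc)
    finally have 1: "conv x y r = (\<Sum>s\<in>S. \<Sum>t\<in>T. (c s * d t) * conv s t r)" .
    have "conv y x r = (\<Sum>t\<in>T. d t * conv t x r)" unfolding ye by (rule conv_left[OF T(1) gT gx])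
    also have "\<dots> = (\<Sum>t\<in>T. d t * (\<Sum>s\<in>S. c s * conv t s r))"
      by (rule sum.cong[OF refl]) (simp only: xe conv_right[OF S(1) gS gT])
    also have "\<dots> = (\<Sum>t\<in>T. \<Sum>s\<in>S. (c s * d t) * conv t s r)"
      by (simp add: sum_distrib_left mult.assoc mult.left_commute)
    also have "\<dots> = (\<Sum>s\<in>S. \<Sum>t\<in>T. (c s * d t) * conv t s r)" by (rule sum.swap)
    finally have 2: "conv y x r = (\<Sum>s\<in>S. \<Sum>t\<in>T. (c s * d t) * conv t s r)" .
    show ?thesis unfolding 1 2 by (simp add: sum_subtractf right_diff_distrib)
  qed
  have "(\<lambda>r. \<Sum>s\<in>S. \<Sum>t\<in>T. (c s * d t) * (conv s t r - conv t s r)) \<in> Bfilt X I G (int (k+l) - 1)"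
  proof (rule B_sum[OF S(1)])
    fix s assume s: "s \<in> S"
    then obtain j g where sj: "s = Bser X I j g" "int j \<le> int k" "g \<in> Gn X I G j" using S(2) by blast
    show "(\<lambda>r. \<Sum>t\<in>T. (c s * d t) * (conv s t r - conv t s r)) \<in> Bfilt X I G (int (k+l) - 1)"
    proof (rule B_sum[OF T(1)])
      fix t assume t: "t \<in> T"
      then obtain j' h where tj: "t = Bser X I j' h" "int j' \<le> int l" "h \<in> Gn X I G j'" using T(2) by blast
      have "(\<lambda>r. conv s t r - conv t s r) \<in> Bfilt X I G (int (k+l) - 1)"
        unfolding sj(1) tj(1) by (rule pair_comm[OF adm X0 sj(3) tj(3)]) (use sj tj in auto)
      thus "(\<lambda>r. (c s * d t) * (conv s t r - conv t s r)) \<in> Bfilt X I G (int (k+l) - 1)"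
        by (rule B_smult)
    qed
  qed
  moreover have "(\<lambda>r. conv x y r - conv y x r) = (\<lambda>r. \<Sum>s\<in>S. \<Sum>t\<in>T. (c s * d t) * (conv s t r - conv t s r))"
    using eq by (rule ext)
  ultimately show ?thesis by simp
qed

theorem proposition3p1:
  fixes X :: "'x set" and I :: "'i set"
    and G :: "(('x,'i) pt \<Rightarrow> ('x,'i) pt) set"
  assumes "finite I" and "countable X" and "admissible_group X I G"
  shows
   "(\<forall>n k g h. g \<in> Gn X I G n \<longrightarrow> h \<in> Gn X I G k \<longrightarrow>
      (let nu = lb_comp (conj_loc X I n g (\<lambda>j. j + k)) ({1..k}, h) in
         fst nu = {1..n+k} \<and> snd nu \<in> Gn X I G (n+k) \<and>
         (\<lambda>r. conv (Bser X I n g) (Bser X I k h) r - Bser X I (n+k) (snd nu) r)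
           \<in> Bfilt X I G (int (n+k) - 1)))
    \<and> (X = {} \<longrightarrow>
       (\<forall>k l x y. x \<in> Bfilt X I G (int k) \<longrightarrow> y \<in> Bfilt X I G (int l) \<longrightarrow>
          (\<lambda>r. conv x y r - conv y x r) \<in> Bfilt X I G (int (k+l) - 1)))"
  using partA[OF assms(3)] partB[OF assms(3)] by blast

end
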